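(* Let $H$ be a $k$-linear Hopf category whose antipode maps $S_{xy}$ are all bijective, let $A$ be a right $H$-comodule category and $B=A^{{\rm co}H}$. Then all maps ${\rm can}'^{y}_{zx}$ ($x,y,z\in X$) are bijective if and only if all maps ${\rm can}^z_{xy}$ ($x,y,z\in X$) are bijective; i.e. $A$ is an $H$-Galois' category extension of $B$ if and only if it is an $H$-Galois category extension of $B$.
   Context: Let $k$ be a commutative ring; unadorned $\otimes$ is over $k$. A $k$-linear category $A$ with class of objects $X$ consists of $k$-modules $A_{xy}$, associative compositions $A_{xy}\otimes A_{yz}\to A_{xz}$, $a\otimes b\mapsto ab$, and units $1_x\in A_{xx}$. A $k$-linear semi-Hopf category $H$ (objects $X$) is a $k$-linear category in which each $H_{xy}$ is a $k$-coalgebra with $\Delta_{xy}(h)=h_{(1)}\otimes h_{(2)}$ and counit $\varepsilon_{xy}$, such that $\Delta_{xz}(hh')=h_{(1)}h'_{(1)}\otimes h_{(2)}h'_{(2)}$, $\Delta_{xx}(1_x)=1_x\otimes1_x$, $\varepsilon_{xz}(hh')=\varepsilon_{xy}(h)\varepsilon_{yz}(h')$, $\varepsilon_{xx}(1_x)=1$. It is a Hopf category if there are $k$-linear maps $S_{xy}:H_{xy}\to H_{yx}$ with $h_{(1)}S_{xy}(h_{(2)})=\varepsilon_{xy}(h)1_x$ and $S_{xy}(h_{(1)})h_{(2)}=\varepsilon_{xy}(h)1_y$. A right $H$-comodule category is a $k$-linear category $A$ with objects $X$ such that each $A_{xy}$ is a right $H_{xy}$-comodule, $\rho_{xy}(a)=a_{[0]}\otimes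 a_{[1]}$, with $\rho_{xz}(ab)=a_{[0]}b_{[0]}\otimes a_{[1]}b_{[1]}$ and $\rho_{xx}(1_x)=1_x\otimes1_x$. Its coinvariants are $B_x=\{a\in A_{xx}\mid\rho_{xx}(a)=a\otimes1_x\}$. The maps are ${\rm can}^z_{xy}:A_{zx}\otimes_{B_x}A_{xy}\to A_{zy}\otimes H_{xy}$, $a\otimes_{B_x}a'\mapsto aa'_{[0]}\otimes a'_{[1]}$, and ${\rm can}'^{y}_{zx}:A_{zx}\otimes_{B_x}A_{xy}\to A_{zy}\otimes H_{zx}$, $a\otimes_{B_x}a'\mapsto a_{[0]}a'\otimes a_{[1]}$. *)

theory Defs
  imports Main
begin

record ('k, 'm) kmod =
  carr :: "'m set"
  addm :: "'m \<Rightarrow> 'm \<Rightarrow> 'm"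
  zerom :: "'m"
  smul :: "'k \<Rightarrow> 'm \<Rightarrow> 'm"

definition kmodule :: "('k::comm_ring_1, 'm) kmod \<Rightarrow> bool" where
  "kmodule M \<longleftrightarrow>
     zerom M \<in> carr M \<and>
     (\<forall>a\<in>carr M. \<forall>b\<in>carr M. addm M a b \<in> carr M) \<and>
     (\<forall>c. \<forall>a\<in>carr M. smul M c a \<in> carr M) \<and>
     (\<forall>a\<in>carr M. \<forall>b\<in>carr M. \<forall>d\<in>carr M. addm M (addm M a b) d = addm M a (addm M b d)) \<and>
     (\<forall>a\<in>carr M. \<forall>b\<in>carr M. addm M a b = addm M b a) \<and>
     (\<forall>a\<in>carr M. addm M (zerom M) a = a) \<and>
     (\<forall>a\<in>carr M. \<exists>b\<in>carr M. addm M a b = zerom M) \<and>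
     (\<forall>c. \<forall>a\<in>carr M. \<forall>b\<in>carr M. smul M c (addm M a b) = addm M (smul M c a) (smul M c b)) \<and>
     (\<forall>c d. \<forall>a\<in>carr M. smul M (c + d) a = addm M (smul M c a) (smul M d a)) \<and>
     (\<forall>c d. \<forall>a\<in>carr M. smul M (c * d) a = smul M c (smul M d a)) \<and>
     (\<forall>a\<in>carr M. smul M 1 a = a)"

definition msum :: "('k, 'm) kmod \<Rightarrow> 'm list \<Rightarrow> 'm" where
  "msum M xs = foldr (addm M) xs (zerom M)"

definition klinear :: "('k, 'm) kmod \<Rightarrow> ('k, 'n) kmod \<Rightarrow> ('m \<Rightarrow> 'n) \<Rightarrow> bool" where
  "klinear M N f \<longleftrightarrow> (\<forall>a\<in>carr M. f a \<in> carr N) \<and>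
     (\<forall>a\<in>carr M. \<forall>b\<in>carr M. f (addm M a b) = addm N (f a) (f b)) \<and>
     (\<forall>c. \<forall>a\<in>carr M. f (smul M c a) = smul N c (f a))"

text \<open>Elements of free k-modules are functions p \<Rightarrow> k; a list of generators (a formal
  sum) is sent to its associated element of the free module.\<close>

definition fr :: "'p list \<Rightarrow> 'p \<Rightarrow> 'k::comm_ring_1" where
  "fr xs = (\<lambda>q. sum_list (map (\<lambda>p. if p = q then 1 else 0) xs))"

definition dl :: "'p \<Rightarrow> 'p \<Rightarrow> 'k::comm_ring_1" where
  "dl p = fr [p]"

inductive_set kspan :: "('p \<Rightarrow> 'k::comm_ring_1) set \<Rightarrow> ('p \<Rightarrow> 'k) set" for G where
  kspan_zero: "(\<lambda>_. 0) \<in> kspan G"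
| kspan_step: "g \<in> G \<Longrightarrow> f \<in> kspan G \<Longrightarrow> (\<lambda>q. c * g q + f q) \<in> kspan G"

definition tgens :: "('k::comm_ring_1, 'a) kmod \<Rightarrow> ('k, 'b) kmod \<Rightarrow> ('a \<times> 'b \<Rightarrow> 'k) set" where
  "tgens M N =
     {(\<lambda>q. dl (addm M a a', b) q - dl (a, b) q - dl (a', b) q) | a a' b.
         a \<in> carr M \<and> a' \<in> carr M \<and> b \<in> carr N}
   \<union> {(\<lambda>q. dl (a, addm N b b') q - dl (a, b) q - dl (a, b') q) | a b b'.
         a \<in> carr M \<and> b \<in> carr N \<and> b' \<in> carr N}
   \<union> {(\<lambda>q. dl (smul M c a, b) q - c * dl (a, b) q) | c a b. a \<in> carr M \<and> b \<in> carr N}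
   \<union> {(\<lambda>q. dl (a, smul N c b) q - c * dl (a, b) q) | c a b. a \<in> carr M \<and> b \<in> carr N}"

text \<open>Equality of two formal sums (lists of elementary tensors a \<otimes> b) in the quotient of
  M \<otimes>_k N by the additional relations p = p' for (p,p') \<in> E.  With E = {} this is
  equality in M \<otimes>_k N.\<close>
definition tens_eq :: "('k::comm_ring_1, 'a) kmod \<Rightarrow> ('k, 'b) kmod \<Rightarrow> (('a \<times> 'b) \<times> ('a \<times> 'b)) set
    \<Rightarrow> ('a \<times> 'b) list \<Rightarrow> ('a \<times> 'b) list \<Rightarrow> bool" where
  "tens_eq M N E xs ys \<longleftrightarrow>
     (\<lambda>q. fr xs q - fr ys q) \<in>
       kspan (tgens M N \<union> {(\<lambda>q. dl p q - dl p' q) | p p'. (p, p') \<in> E})"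

definition tgens3 :: "('k::comm_ring_1, 'a) kmod \<Rightarrow> ('k, 'b) kmod \<Rightarrow> ('k, 'c) kmod
    \<Rightarrow> ('a \<times> 'b \<times> 'c \<Rightarrow> 'k) set" where
  "tgens3 M N P =
     {(\<lambda>q. dl (addm M a a', b, d) q - dl (a, b, d) q - dl (a', b, d) q) | a a' b d.
         a \<in> carr M \<and> a' \<in> carr M \<and> b \<in> carr N \<and> d \<in> carr P}
   \<union> {(\<lambda>q. dl (a, addm N b b', d) q - dl (a, b, d) q - dl (a, b', d) q) | a b b' d.
         a \<in> carr M \<and> b \<in> carr N \<and> b' \<in> carr N \<and> d \<in> carr P}
   \<union> {(\<lambda>q. dl (a, b, addm P d d') q - dl (a, b, d) q - dl (a, b, d') q) | a b d d'.
         a \<in> carr M \<and> b \<in> carr N \<and> d \<in> carr P \<and> d' \<in> carr P}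
   \<union> {(\<lambda>q. dl (smul M c a, b, d) q - c * dl (a, b, d) q) | c a b d.
         a \<in> carr M \<and> b \<in> carr N \<and> d \<in> carr P}
   \<union> {(\<lambda>q. dl (a, smul N c b, d) q - c * dl (a, b, d) q) | c a b d.
         a \<in> carr M \<and> b \<in> carr N \<and> d \<in> carr P}
   \<union> {(\<lambda>q. dl (a, b, smul P c d) q - c * dl (a, b, d) q) | c a b d.
         a \<in> carr M \<and> b \<in> carr N \<and> d \<in> carr P}"

definition tens3_eq :: "('k::comm_ring_1, 'a) kmod \<Rightarrow> ('k, 'b) kmod \<Rightarrow> ('k, 'c) kmod
    \<Rightarrow> ('a \<times> 'b \<times> 'c) list \<Rightarrow> ('a \<times> 'b \<times> 'c) list \<Rightarrow> bool" where
  "tens3_eq M N P xs ys \<longleftrightarrow> (\<lambda>q. fr xs q - fr ys q) \<in> kspan (tgens3 M N P)"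

definition in_tens :: "('k, 'a) kmod \<Rightarrow> ('k, 'b) kmod \<Rightarrow> ('a \<times> 'b) list \<Rightarrow> bool" where
  "in_tens M N xs \<longleftrightarrow> (\<forall>(a, b) \<in> set xs. a \<in> carr M \<and> b \<in> carr N)"

text \<open>A map f on formal sums induces a (well-defined) bijection
  (M \<otimes> N)/E \<rightarrow> (M' \<otimes> N')/E'.\<close>
definition induces_bij ::
  "('k::comm_ring_1, 'a) kmod \<Rightarrow> ('k, 'b) kmod \<Rightarrow> (('a \<times> 'b) \<times> ('a \<times> 'b)) set \<Rightarrow>
   ('k, 'c) kmod \<Rightarrow> ('k, 'd) kmod \<Rightarrow> (('c \<times> 'd) \<times> ('c \<times> 'd)) set \<Rightarrow>
   (('a \<times> 'b) list \<Rightarrow> ('c \<times> 'd) list) \<Rightarrow> bool" where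
  "induces_bij M N E M' N' E' f \<longleftrightarrow>
     (\<forall>xs. in_tens M N xs \<longrightarrow> in_tens M' N' (f xs)) \<and>
     (\<forall>xs ys. in_tens M N xs \<longrightarrow> in_tens M N ys \<longrightarrow>
        (tens_eq M N E xs ys \<longleftrightarrow> tens_eq M' N' E' (f xs) (f ys))) \<and>
     (\<forall>zs. in_tens M' N' zs \<longrightarrow> (\<exists>xs. in_tens M N xs \<and> tens_eq M' N' E' (f xs) zs))"

record ('x, 'k, 'm) kcat =
  hom :: "'x \<Rightarrow> 'x \<Rightarrow> ('k, 'm) kmod"
  comp :: "'x \<Rightarrow> 'x \<Rightarrow> 'x \<Rightarrow> 'm \<Rightarrow> 'm \<Rightarrow> 'm"   \<comment> \<open>comp x y z a b = ab for a \<in> A_xy, b \<in> A_yz\<close>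
  ident :: "'x \<Rightarrow> 'm"

definition klinear_category :: "('x, 'k::comm_ring_1, 'm) kcat \<Rightarrow> bool" where
  "klinear_category A \<longleftrightarrow>
     (\<forall>x y. kmodule (hom A x y)) \<and>
     (\<forall>x y z. \<forall>a\<in>carr (hom A x y). \<forall>b\<in>carr (hom A y z). comp A x y z a b \<in> carr (hom A x z)) \<and>
     (\<forall>x y z. \<forall>a\<in>carr (hom A x y). \<forall>a'\<in>carr (hom A x y). \<forall>b\<in>carr (hom A y z).
        comp A x y z (addm (hom A x y) a a') b = addm (hom A x z) (comp A x y z a b) (comp A x y z a' b)) \<and>
     (\<forall>x y z. \<forall>a\<in>carr (hom A x y). \<forall>b\<in>carr (hom A y z). \<forall>b'\<in>carr (hom A y z).
        comp A x y z a (addm (hom A y z) b b') = addm (hom A x z) (comp A x y z a b) (comp A x y z a b')) \<and>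
     (\<forall>x y z c. \<forall>a\<in>carr (hom A x y). \<forall>b\<in>carr (hom A y z).
        comp A x y z (smul (hom A x y) c a) b = smul (hom A x z) c (comp A x y z a b) \<and>
        comp A x y z a (smul (hom A y z) c b) = smul (hom A x z) c (comp A x y z a b)) \<and>
     (\<forall>x y z w. \<forall>a\<in>carr (hom A x y). \<forall>b\<in>carr (hom A y z). \<forall>d\<in>carr (hom A z w).
        comp A x z w (comp A x y z a b) d = comp A x y w a (comp A y z w b d)) \<and>
     (\<forall>x. ident A x \<in> carr (hom A x x)) \<and>
     (\<forall>x y. \<forall>a\<in>carr (hom A x y). comp A x x y (ident A x) a = a \<and> comp A x y y a (ident A y) = a)"

definition kcoalgebra :: "('k::comm_ring_1, 'm) kmod \<Rightarrow> ('m \<Rightarrow> ('m \<times> 'm) list) \<Rightarrow> ('m \<Rightarrow> 'k) \<Rightarrow> bool" where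
  "kcoalgebra M \<Delta> \<epsilon> \<longleftrightarrow>
     kmodule M \<and>
     (\<forall>a\<in>carr M. in_tens M M (\<Delta> a)) \<and>
     (\<forall>a\<in>carr M. \<forall>b\<in>carr M. tens_eq M M {} (\<Delta> (addm M a b)) (\<Delta> a @ \<Delta> b)) \<and>
     (\<forall>c. \<forall>a\<in>carr M. tens_eq M M {} (\<Delta> (smul M c a)) (map (\<lambda>(u, v). (smul M c u, v)) (\<Delta> a))) \<and>
     (\<forall>a\<in>carr M. \<forall>b\<in>carr M. \<epsilon> (addm M a b) = \<epsilon> a + \<epsilon> b) \<and>
     (\<forall>c. \<forall>a\<in>carr M. \<epsilon> (smul M c a) = c * \<epsilon> a) \<and>
     (\<forall>a\<in>carr M. tens3_eq M M M
        (concat (map (\<lambda>(u, v). map (\<lambda>(p, q). (p, q, v)) (\<Delta> u)) (\<Delta> a)))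
        (concat (map (\<lambda>(u, v). map (\<lambda>(p, q). (u, p, q)) (\<Delta> v)) (\<Delta> a)))) \<and>
     (\<forall>a\<in>carr M. msum M (map (\<lambda>(u, v). smul M (\<epsilon> u) v) (\<Delta> a)) = a \<and>
                 msum M (map (\<lambda>(u, v). smul M (\<epsilon> v) u) (\<Delta> a)) = a)"

definition semi_hopf_category ::
  "('x, 'k::comm_ring_1, 'h) kcat \<Rightarrow> ('x \<Rightarrow> 'x \<Rightarrow> 'h \<Rightarrow> ('h \<times> 'h) list) \<Rightarrow> ('x \<Rightarrow> 'x \<Rightarrow> 'h \<Rightarrow> 'k) \<Rightarrow> bool" where
  "semi_hopf_category H \<Delta> \<epsilon> \<longleftrightarrow>
     klinear_category H \<and>
     (\<forall>x y. kcoalgebra (hom H x y) (\<Delta> x y) (\<epsilon> x y)) \<and>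
     (\<forall>x y z. \<forall>h\<in>carr (hom H x y). \<forall>h'\<in>carr (hom H y z).
        tens_eq (hom H x z) (hom H x z) {} (\<Delta> x z (comp H x y z h h'))
          (concat (map (\<lambda>(u, v). map (\<lambda>(u', v'). (comp H x y z u u', comp H x y z v v')) (\<Delta> y z h')) (\<Delta> x y h)))) \<and>
     (\<forall>x. tens_eq (hom H x x) (hom H x x) {} (\<Delta> x x (ident H x)) [(ident H x, ident H x)]) \<and>
     (\<forall>x y z. \<forall>h\<in>carr (hom H x y). \<forall>h'\<in>carr (hom H y z).
        \<epsilon> x z (comp H x y z h h') = \<epsilon> x y h * \<epsilon> y z h') \<and>
     (\<forall>x. \<epsilon> x x (ident H x) = 1)"

definition hopf_category ::
  "('x, 'k::comm_ring_1, 'h) kcat \<Rightarrow> ('x \<Rightarrow> 'x \<Rightarrow> 'h \<Rightarrow> ('h \<times> 'h) list) \<Rightarrow> ('x \<Rightarrow> 'x \<Rightarrow> 'h \<Rightarrow> 'k)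
    \<Rightarrow> ('x \<Rightarrow> 'x \<Rightarrow> 'h \<Rightarrow> 'h) \<Rightarrow> bool" where
  "hopf_category H \<Delta> \<epsilon> S \<longleftrightarrow>
     semi_hopf_category H \<Delta> \<epsilon> \<and>
     (\<forall>x y. klinear (hom H x y) (hom H y x) (S x y)) \<and>
     (\<forall>x y. \<forall>h\<in>carr (hom H x y).
        msum (hom H x x) (map (\<lambda>(u, v). comp H x y x u (S x y v)) (\<Delta> x y h))
          = smul (hom H x x) (\<epsilon> x y h) (ident H x) \<and>
        msum (hom H y y) (map (\<lambda>(u, v). comp H y x y (S x y u) v) (\<Delta> x y h))
          = smul (hom H y y) (\<epsilon> x y h) (ident H y))"

definition kcomodule ::
  "('k::comm_ring_1, 'a) kmod \<Rightarrow> ('k, 'h) kmod \<Rightarrow> ('h \<Rightarrow> ('h \<times> 'h) list) \<Rightarrow> ('h \<Rightarrow> 'k)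
    \<Rightarrow> ('a \<Rightarrow> ('a \<times> 'h) list) \<Rightarrow> bool" where
  "kcomodule M C \<Delta> \<epsilon> \<rho> \<longleftrightarrow>
     kmodule M \<and>
     (\<forall>m\<in>carr M. in_tens M C (\<rho> m)) \<and>
     (\<forall>m\<in>carr M. \<forall>n\<in>carr M. tens_eq M C {} (\<rho> (addm M m n)) (\<rho> m @ \<rho> n)) \<and>
     (\<forall>c. \<forall>m\<in>carr M. tens_eq M C {} (\<rho> (smul M c m)) (map (\<lambda>(a, h). (smul M c a, h)) (\<rho> m))) \<and>
     (\<forall>m\<in>carr M. tens3_eq M C C
        (concat (map (\<lambda>(a, h). map (\<lambda>(p, q). (p, q, h)) (\<rho> a)) (\<rho> m)))
        (concat (map (\<lambda>(a, h). map (\<lambda>(p, q). (a, p, q)) (\<Delta> h)) (\<rho> m)))) \<and>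
     (\<forall>m\<in>carr M. msum M (map (\<lambda>(a, h). smul M (\<epsilon> h) a) (\<rho> m)) = m)"

definition comodule_category ::
  "('x, 'k::comm_ring_1, 'h) kcat \<Rightarrow> ('x \<Rightarrow> 'x \<Rightarrow> 'h \<Rightarrow> ('h \<times> 'h) list) \<Rightarrow> ('x \<Rightarrow> 'x \<Rightarrow> 'h \<Rightarrow> 'k)
    \<Rightarrow> ('x, 'k, 'a) kcat \<Rightarrow> ('x \<Rightarrow> 'x \<Rightarrow> 'a \<Rightarrow> ('a \<times> 'h) list) \<Rightarrow> bool" where
  "comodule_category H \<Delta> \<epsilon> A \<rho> \<longleftrightarrow>
     klinear_category A \<and>
     (\<forall>x y. kcomodule (hom A x y) (hom H x y) (\<Delta> x y) (\<epsilon> x y) (\<rho> x y)) \<and>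
     (\<forall>x y z. \<forall>a\<in>carr (hom A x y). \<forall>b\<in>carr (hom A y z).
        tens_eq (hom A x z) (hom H x z) {} (\<rho> x z (comp A x y z a b))
          (concat (map (\<lambda>(a0, a1). map (\<lambda>(b0, b1). (comp A x y z a0 b0, comp H x y z a1 b1)) (\<rho> y z b)) (\<rho> x y a)))) \<and>
     (\<forall>x. tens_eq (hom A x x) (hom H x x) {} (\<rho> x x (ident A x)) [(ident A x, ident H x)])"

definition coinv :: "('x, 'k::comm_ring_1, 'h) kcat \<Rightarrow> ('x, 'k, 'a) kcat
    \<Rightarrow> ('x \<Rightarrow> 'x \<Rightarrow> 'a \<Rightarrow> ('a \<times> 'h) list) \<Rightarrow> 'x \<Rightarrow> 'a set" where
  "coinv H A \<rho> x = {a \<in> carr (hom A x x).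
      tens_eq (hom A x x) (hom H x x) {} (\<rho> x x a) [(a, ident H x)]}"

text \<open>Balancing relations defining A_zx \<otimes>_{B_x} A_xy as a quotient of A_zx \<otimes>_k A_xy.\<close>
definition bal_rel :: "('x, 'k::comm_ring_1, 'h) kcat \<Rightarrow> ('x, 'k, 'a) kcat
    \<Rightarrow> ('x \<Rightarrow> 'x \<Rightarrow> 'a \<Rightarrow> ('a \<times> 'h) list) \<Rightarrow> 'x \<Rightarrow> 'x \<Rightarrow> 'x \<Rightarrow> (('a \<times> 'a) \<times> ('a \<times> 'a)) set" where
  "bal_rel H A \<rho> z x y = {((comp A z x x a b, a'), (a, comp A x x y b a')) | a b a'.
      a \<in> carr (hom A z x) \<and> b \<in> coinv H A \<rho> x \<and> a' \<in> carr (hom A x y)}"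

text \<open>can^z_{xy}(a \<otimes> a') = a a'_[0] \<otimes> a'_[1], on formal sums.\<close>
definition can :: "('x, 'k, 'a) kcat \<Rightarrow> ('x \<Rightarrow> 'x \<Rightarrow> 'a \<Rightarrow> ('a \<times> 'h) list) \<Rightarrow> 'x \<Rightarrow> 'x \<Rightarrow> 'x
    \<Rightarrow> ('a \<times> 'a) list \<Rightarrow> ('a \<times> 'h) list" where
  "can A \<rho> z x y xs = concat (map (\<lambda>(a, a'). map (\<lambda>(p, q). (comp A z x y a p, q)) (\<rho> x y a')) xs)"

text \<open>can'^y_{zx}(a \<otimes> a') = a_[0] a' \<otimes> a_[1], on formal sums.\<close>
definition can' :: "('x, 'k, 'a) kcat \<Rightarrow> ('x \<Rightarrow> 'x \<Rightarrow> 'a \<Rightarrow> ('a \<times> 'h) list) \<Rightarrow> 'x \<Rightarrow> 'x \<Rightarrow> 'x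
    \<Rightarrow> ('a \<times> 'a) list \<Rightarrow> ('a \<times> 'h) list" where
  "can' A \<rho> z x y xs = concat (map (\<lambda>(a, a'). map (\<lambda>(p, q). (comp A z x y p a', q)) (\<rho> z x a)) xs)"

end

theory Submission
  imports Defs
begin


definition cm :: "('p \<Rightarrow> 'q list) \<Rightarrow> 'p list \<Rightarrow> 'q list" where
  "cm t xs = concat (map t xs)"

lemma cm_simps[simp]: "cm t [] = []" "cm t (x#xs) = t x @ cm t xs" "cm t (xs@ys) = cm t xs @ cm t ys"
  by (auto simp: cm_def)

lemma cm_map[simp]: "cm t (map f xs) = cm (\<lambda>x. t (f x)) xs" by (induct xs) auto
lemma cm_cm: "cm t (cm u xs) = cm (\<lambda>x. cm t (u x)) xs" by (induct xs) auto
lemma map_cm: "map f (cm t xs) = cm (\<lambda>x. map f (t x)) xs" by (induct xs) auto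
lemma cm_single: "cm (\<lambda>x. [f x]) xs = map f xs" by (induct xs) auto
lemma set_cm: "set (cm t xs) = (\<Union>x\<in>set xs. set (t x))" by (simp add: cm_def)

lemma kspan_gen: assumes "g \<in> G" shows "g \<in> kspan G"
proof -
  have "(\<lambda>q. 1 * g q + (\<lambda>_. 0) q) \<in> kspan G" by (rule kspan_step[OF assms kspan_zero])
  then show ?thesis by simp
qed

lemma kspan_add: "u \<in> kspan G \<Longrightarrow> v \<in> kspan G \<Longrightarrow> (\<lambda>q. u q + v q) \<in> kspan G"
proof (induction u rule: kspan.induct)
  case kspan_zero then show ?case by simp
next
  case (kspan_step g f c)
  have "(\<lambda>q. c * g q + f q + v q) = (\<lambda>q. c * g q + (f q + v q))" by (simp add: add.assoc)
  have "(\<lambda>q. f q + v q) \<in> kspan G" using kspan_step by blast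
  from kspan.kspan_step[OF kspan_step(1) this, of c] show ?case using \<open>(\<lambda>q. c * g q + f q + v q) = _\<close> by simp
qed

lemma kspan_smul: "u \<in> kspan G \<Longrightarrow> (\<lambda>q. c * u q) \<in> kspan G"
proof (induction u rule: kspan.induct)
  case kspan_zero then show ?case by (simp add: kspan.kspan_zero)
next
  case (kspan_step g f d)
  have "(\<lambda>q. c * (d * g q + f q)) = (\<lambda>q. (c*d) * g q + c * f q)" by (simp add: algebra_simps)
  then show ?case using kspan.kspan_step[OF kspan_step(1,3)] by simp
qed

lemma kspan_eq: "u \<in> kspan G \<Longrightarrow> (\<And>q. u q = v q) \<Longrightarrow> v \<in> kspan G"
proof -
  assume "u \<in> kspan G" "\<And>q. u q = v q" then have "u = v" by auto
  then show ?thesis using \<open>u \<in> kspan G\<close> by simp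
qed

lemma kspan_comb: "u \<in> kspan G \<Longrightarrow> v \<in> kspan G \<Longrightarrow> (\<lambda>q. a * u q + b * v q) \<in> kspan G"
  by (intro kspan_add kspan_smul)

lemma kspan_diff: "u \<in> kspan G \<Longrightarrow> v \<in> kspan G \<Longrightarrow> (\<lambda>q. u q - v q) \<in> kspan G"
  using kspan_comb[of u G v 1 "-1"] by simp

lemma kspan_0: "(\<lambda>q. 0) \<in> kspan G" by (rule kspan_zero)

lemma kspan_mono: "u \<in> kspan G \<Longrightarrow> G \<subseteq> G' \<Longrightarrow> u \<in> kspan G'"
proof (induction u rule: kspan.induct)
  case kspan_zero then show ?case by (simp add: kspan.kspan_zero)
next
  case (kspan_step g f c) then show ?case using kspan.kspan_step[of g G' f c] by blast
qed

lemma kspan_kspan: "u \<in> kspan G \<Longrightarrow> G \<subseteq> kspan G' \<Longrightarrow> u \<in> kspan G'"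
proof (induction u rule: kspan.induct)
  case kspan_zero then show ?case by (simp add: kspan.kspan_zero)
next
  case (kspan_step g f c) then show ?case using kspan_comb[of g G' f c 1] by auto
qed

lemma dl_eq: "dl p q = (if p = q then 1 else 0)" by (simp add: dl_def fr_def)
lemma fr_Nil[simp]: "fr [] q = 0" by (simp add: fr_def)
lemma fr_Cons[simp]: "fr (x#xs) q = (if x = q then 1 else 0) + fr xs q" by (simp add: fr_def)
lemma fr_append[simp]: "fr (xs@ys) q = fr xs q + fr ys q" by (simp add: fr_def)

lemma fr_supp: "{q. fr xs q \<noteq> (0::'k::comm_ring_1)} \<subseteq> set xs"
  by (induct xs) auto

lemma fr_fin: "finite {q. fr xs q \<noteq> (0::'k::comm_ring_1)}"
  by (rule finite_subset[OF fr_supp]) simp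

lemma dl_fin: "finite {q. dl p q \<noteq> (0::'k::comm_ring_1)}"
  by (simp add: dl_def fr_fin)

lemma kspan_fin: "u \<in> kspan G \<Longrightarrow> (\<forall>g\<in>G. finite {q. g q \<noteq> 0}) \<Longrightarrow> finite {q. u q \<noteq> (0::'k::comm_ring_1)}"
proof (induction u rule: kspan.induct)
  case kspan_zero then show ?case by simp
next
  case (kspan_step g f c)
  have "{q. c * g q + f q \<noteq> 0} \<subseteq> {q. g q \<noteq> 0} \<union> {q. f q \<noteq> 0}" by auto
  moreover have "finite {q. g q \<noteq> 0}" using kspan_step by blast
  moreover have "finite {q. f q \<noteq> 0}" using kspan_step by blast
  ultimately show ?case by (meson finite_Un finite_subset)
qed

section \<open>Linear extension\<close>

definition Ext :: "('p \<Rightarrow> 'q list) \<Rightarrow> ('p \<Rightarrow> 'k::comm_ring_1) \<Rightarrow> 'q \<Rightarrow> 'k" where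
  "Ext t u = (\<lambda>r. \<Sum>p\<in>{p. u p \<noteq> 0}. u p * fr (t p) r)"

lemma Ext_sup: "finite S \<Longrightarrow> {p. u p \<noteq> 0} \<subseteq> S \<Longrightarrow> Ext t u r = (\<Sum>p\<in>S. u p * fr (t p) r)"
  unfolding Ext_def by (rule sum.mono_neutral_left) auto

lemma Ext_lin:
  assumes "finite {p. u p \<noteq> 0}" "finite {p. v p \<noteq> 0}"
  shows "Ext t (\<lambda>q. c * u q + v q) r = c * Ext t u r + Ext t v r"
proof -
  let ?S = "{p. u p \<noteq> 0} \<union> {p. v p \<noteq> 0}"
  have f: "finite ?S" using assms by simp
  have "Ext t (\<lambda>q. c * u q + v q) r = (\<Sum>p\<in>?S. (c * u p + v p) * fr (t p) r)"
    by (rule Ext_sup[OF f]) auto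
  also have "\<dots> = c * (\<Sum>p\<in>?S. u p * fr (t p) r) + (\<Sum>p\<in>?S. v p * fr (t p) r)"
    by (simp add: sum.distrib sum_distrib_left algebra_simps)
  also have "\<dots> = c * Ext t u r + Ext t v r"
    using Ext_sup[OF f, of u t r] Ext_sup[OF f, of v t r] by auto
  finally show ?thesis .
qed

lemma Ext_zero: "Ext t (\<lambda>q. 0) r = 0" by (simp add: Ext_def)

lemma Ext_dl: "Ext t (dl p) r = fr (t p) r"
proof -
  have "Ext t (dl p) r = (\<Sum>p'\<in>{p}. dl p p' * fr (t p') r)"
    by (rule Ext_sup) (auto simp: dl_eq split: if_splits)
  then show ?thesis by (simp add: dl_eq)
qed

lemma fr_cons_dl: "fr (x#xs) = (\<lambda>q. 1 * dl x q + fr xs q)" by (auto simp: dl_eq)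

lemma fr_cm: "fr (cm t xs) r = (Ext t (fr xs) r :: 'k::comm_ring_1)"
proof (induction xs)
  case Nil then show ?case by (simp add: Ext_def)
next
  case (Cons x xs)
  have "Ext t (fr (x#xs)) r = 1 * Ext t (dl x) r + Ext t (fr xs) r"
    unfolding fr_cons_dl by (rule Ext_lin[OF dl_fin fr_fin])
  then have E: "Ext t (fr (x#xs)) r = fr (t x) r + (Ext t (fr xs) r :: 'k)" by (simp add: Ext_dl)
  have "fr (cm t (x#xs)) r = fr (t x) r + (Ext t (fr xs) r :: 'k)" using Cons by simp
  then show ?case by (simp only: E)
qed

lemma Ext_kspan:
  assumes "\<forall>g\<in>G. finite {q. g q \<noteq> 0} \<and> Ext t g \<in> kspan G'"
  and "u \<in> kspan G"
  shows "Ext t u \<in> kspan G'"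
  using assms(2)
proof (induction u rule: kspan.induct)
  case kspan_zero
  show ?case by (rule kspan_eq[OF kspan_0]) (simp add: Ext_zero)
next
  case (kspan_step g f c)
  have fg: "finite {q. g q \<noteq> 0}" using assms kspan_step by auto
  have ff: "finite {q. f q \<noteq> 0}" using kspan_fin[OF kspan_step(2)] assms by auto
  have "(\<lambda>r. c * Ext t g r + 1 * Ext t f r) \<in> kspan G'"
    using kspan_comb[of "Ext t g" G' "Ext t f" c 1] assms kspan_step by auto
  then show ?case by (rule kspan_eq) (simp add: Ext_lin[OF fg ff])
qed

definition req :: "('p \<Rightarrow> 'k::comm_ring_1) set \<Rightarrow> 'p list \<Rightarrow> 'p list \<Rightarrow> bool" where
  "req G xs ys \<longleftrightarrow> (\<lambda>q. fr xs q - fr ys q) \<in> kspan G"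

lemma req_refl: "req G xs xs" by (simp add: req_def kspan_0)
lemma req_sym: assumes "req G xs ys" shows "req G ys xs"
proof -
  have "(\<lambda>q. (-1) * (fr xs q - fr ys q)) \<in> kspan G" using assms kspan_smul unfolding req_def by blast
  then show ?thesis unfolding req_def by (rule kspan_eq) (simp add: algebra_simps)
qed
lemma req_trans: assumes "req G xs ys" "req G ys zs" shows "req G xs zs"
proof -
  have "(\<lambda>q. (fr xs q - fr ys q) + (fr ys q - fr zs q)) \<in> kspan G" using assms kspan_add unfolding req_def by blast
  then show ?thesis unfolding req_def by (rule kspan_eq) (simp add: algebra_simps)
qed
lemma req_app: assumes "req G xs ys" "req G xs' ys'" shows "req G (xs@xs') (ys@ys')"
proof -
  have "(\<lambda>q. (fr xs q - fr ys q) + (fr xs' q - fr ys' q)) \<in> kspan G" using assms kspan_add unfolding req_def by blast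
  then show ?thesis unfolding req_def by (rule kspan_eq) (simp add: algebra_simps)
qed
lemma req_fr: fixes G :: "('p \<Rightarrow> 'k::comm_ring_1) set" assumes "\<And>q. fr xs q = (fr ys q :: 'k)" shows "req G xs ys"
  unfolding req_def by (rule kspan_eq[OF kspan_0]) (simp add: assms)
lemma req_cm_pt: "(\<And>x. x \<in> set xs \<Longrightarrow> req G (t x) (t' x)) \<Longrightarrow> req G (cm t xs) (cm t' xs)"
proof (induct xs)
  case Nil then show ?case by (simp add: req_refl)
next
  case (Cons x xs) then show ?case using req_app[of G "t x" "t' x" "cm t xs" "cm t' xs"] by simp
qed

lemma req_cm:
  assumes "\<forall>g\<in>G. finite {q. g q \<noteq> 0} \<and> Ext t g \<in> kspan G'" "req G xs ys"
  shows "req G' (cm t xs) (cm t ys)"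
proof -
  have fx: "finite {q. fr xs q \<noteq> 0}" "finite {q. fr ys q \<noteq> 0}" by (rule fr_fin)+
  have "Ext t (\<lambda>q. fr xs q - fr ys q) \<in> kspan G'" using Ext_kspan assms unfolding req_def by blast
  moreover have "Ext t (\<lambda>q. fr xs q - fr ys q) r = fr (cm t xs) r - fr (cm t ys) r" for r
    using Ext_lin[OF fx(2) fx(1), of t "-1" r] by (simp add: fr_cm)
  ultimately show ?thesis unfolding req_def by (rule kspan_eq)
qed


lemma fin_sub: "finite {q. u q \<noteq> 0} \<Longrightarrow> finite {q. v q \<noteq> 0} \<Longrightarrow> finite {q. u q - v q \<noteq> (0::'k::comm_ring_1)}"
  by (rule finite_subset[of _ "{q. u q \<noteq> 0} \<union> {q. v q \<noteq> 0}"]) auto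
lemma fin_add: "finite {q. u q \<noteq> 0} \<Longrightarrow> finite {q. v q \<noteq> 0} \<Longrightarrow> finite {q. u q + v q \<noteq> (0::'k::comm_ring_1)}"
  by (rule finite_subset[of _ "{q. u q \<noteq> 0} \<union> {q. v q \<noteq> 0}"]) auto
lemma fin_scal: "finite {q. u q \<noteq> 0} \<Longrightarrow> finite {q. c * u q \<noteq> (0::'k::comm_ring_1)}"
  by (rule finite_subset[of _ "{q. u q \<noteq> 0}"]) auto
lemma fin_dl: "finite {q. dl p q \<noteq> (0::'k::comm_ring_1)}" by (rule dl_fin)
lemma fin_fr: "finite {q. fr xs q \<noteq> (0::'k::comm_ring_1)}" by (rule fr_fin)
lemmas fin_rules = fin_sub fin_add fin_scal fin_dl fin_fr

lemma Ext_add: "finite {q. u q \<noteq> 0} \<Longrightarrow> finite {q. v q \<noteq> 0} \<Longrightarrow> Ext t (\<lambda>q. u q + v q) r = Ext t u r + (Ext t v r :: 'k::comm_ring_1)"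
  using Ext_lin[of u v t 1 r] by simp
lemma Ext_scal: "finite {q. u q \<noteq> 0} \<Longrightarrow> Ext t (\<lambda>q. c * u q) r = c * (Ext t u r :: 'k::comm_ring_1)"
  using Ext_lin[of u "\<lambda>_. 0" t c r] by (simp add: Ext_zero)
lemma Ext_sub: "finite {q. u q \<noteq> 0} \<Longrightarrow> finite {q. v q \<noteq> 0} \<Longrightarrow> Ext t (\<lambda>q. u q - v q) r = Ext t u r - (Ext t v r :: 'k::comm_ring_1)"
  using Ext_lin[of v u t "-1" r] by simp
lemma Ext_3: "Ext t (\<lambda>q. dl p1 q - dl p2 q - dl p3 q) r = fr (t p1) r - fr (t p2) r - (fr (t p3) r :: 'k::comm_ring_1)"
proof -
  have "Ext t (\<lambda>q. (\<lambda>q. dl p1 q - dl p2 q) q - dl p3 q) r = Ext t (\<lambda>q. dl p1 q - dl p2 q) r - (Ext t (dl p3) r :: 'k)"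
    by (rule Ext_sub) (intro fin_rules)+
  also have "Ext t (\<lambda>q. dl p1 q - dl p2 q) r = Ext t (dl p1) r - (Ext t (dl p2) r :: 'k)"
    by (rule Ext_sub) (intro fin_rules)+
  finally show ?thesis by (simp add: Ext_dl)
qed
lemma Ext_2: "Ext t (\<lambda>q. dl p1 q - c * dl p2 q) r = fr (t p1) r - c * (fr (t p2) r :: 'k::comm_ring_1)"
proof -
  have "Ext t (\<lambda>q. dl p1 q - (\<lambda>q. c * dl p2 q) q) r = Ext t (dl p1) r - (Ext t (\<lambda>q. c * dl p2 q) r :: 'k)"
    by (rule Ext_sub) (intro fin_rules)+
  also have "Ext t (\<lambda>q. c * dl p2 q) r = c * (Ext t (dl p2) r :: 'k)"
    by (rule Ext_scal) (intro fin_rules)+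
  finally show ?thesis by (simp add: Ext_dl)
qed
lemmas Ext_rules = Ext_3 Ext_2

lemma req_fr_cong: fixes G :: "('p \<Rightarrow> 'k::comm_ring_1) set" shows "req G X Y \<Longrightarrow> (\<And>q. fr X q = (fr X' q::'k)) \<Longrightarrow> (\<And>q. fr Y q = (fr Y' q::'k)) \<Longrightarrow> req G X' Y'"
  unfolding req_def by (erule kspan_eq) simp

lemma teq_req: "tens_eq M N {} xs ys \<longleftrightarrow> req (tgens M N) xs ys"
  by (simp add: tens_eq_def req_def)
lemma teq3_req: "tens3_eq M N P xs ys \<longleftrightarrow> req (tgens3 M N P) xs ys"
  by (simp add: tens3_eq_def req_def)

lemma tgens_fin: "g \<in> tgens M N \<Longrightarrow> finite {q. g q \<noteq> (0::'k::comm_ring_1)}"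
  unfolding tgens_def by (auto intro!: fin_rules)
lemma tgens3_fin: "g \<in> tgens3 M N P \<Longrightarrow> finite {q. g q \<noteq> (0::'k::comm_ring_1)}"
  unfolding tgens3_def by (auto intro!: fin_rules)

lemma gen_sum_req: "(\<lambda>r. fr X r - fr Y r - fr Z r) \<in> kspan G \<Longrightarrow> req G X (Y @ Z)"
  unfolding req_def by (erule kspan_eq) (simp add: algebra_simps)

lemma req_gen_sum: "req G X (Y @ Z) \<Longrightarrow> (\<lambda>r. fr X r - fr Y r - fr Z r) \<in> kspan G"
  unfolding req_def by (erule kspan_eq) (simp add: algebra_simps)

lemma tens_cm:
  fixes t :: "'a \<times> 'b \<Rightarrow> 'c list" and G' :: "('c \<Rightarrow> 'k::comm_ring_1) set"
  assumes A1: "\<And>a a' b. a \<in> carr M \<Longrightarrow> a' \<in> carr M \<Longrightarrow> b \<in> carr N \<Longrightarrow>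
      req G' (t (addm M a a', b)) (t (a, b) @ t (a', b))"
  and A2: "\<And>a b b'. a \<in> carr M \<Longrightarrow> b \<in> carr N \<Longrightarrow> b' \<in> carr N \<Longrightarrow>
      req G' (t (a, addm N b b')) (t (a, b) @ t (a, b'))"
  and S1: "\<And>c a b. a \<in> carr M \<Longrightarrow> b \<in> carr N \<Longrightarrow>
      (\<lambda>r. fr (t (smul M c a, b)) r - c * fr (t (a, b)) r) \<in> kspan G'"
  and S2: "\<And>c a b. a \<in> carr M \<Longrightarrow> b \<in> carr N \<Longrightarrow>
      (\<lambda>r. fr (t (a, smul N c b)) r - c * fr (t (a, b)) r) \<in> kspan G'"
  and R: "req (tgens M N) xs ys"
  shows "req G' (cm t xs) (cm t ys)"
proof (rule req_cm[OF _ R], intro ballI conjI)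
  fix g :: "'a \<times> 'b \<Rightarrow> 'k" assume g: "g \<in> tgens M N"
  then show "finite {q. g q \<noteq> 0}" by (rule tgens_fin)
  from g show "Ext t g \<in> kspan G'" unfolding tgens_def
  proof (elim UnE CollectE exE conjE)
    fix a a' b assume e: "g = (\<lambda>q. dl (addm M a a', b) q - dl (a, b) q - dl (a', b) q)"
      and c: "a \<in> carr M" "a' \<in> carr M" "b \<in> carr N"
    show ?thesis using req_gen_sum[OF A1[OF c]] unfolding e
      by (rule kspan_eq) (simp only: Ext_rules)
  next
    fix a b b' assume e: "g = (\<lambda>q. dl (a, addm N b b') q - dl (a, b) q - dl (a, b') q)"
      and c: "a \<in> carr M" "b \<in> carr N" "b' \<in> carr N"
    show ?thesis using req_gen_sum[OF A2[OF c]] unfolding e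
      by (rule kspan_eq) (simp only: Ext_rules)
  next
    fix c a b assume e: "g = (\<lambda>q. dl (smul M c a, b) q - c * dl (a, b) q)"
      and h: "a \<in> carr M" "b \<in> carr N"
    show ?thesis using S1[OF h, of c] unfolding e
      by (rule kspan_eq) (simp only: Ext_rules)
  next
    fix c a b assume e: "g = (\<lambda>q. dl (a, smul N c b) q - c * dl (a, b) q)"
      and h: "a \<in> carr M" "b \<in> carr N"
    show ?thesis using S2[OF h, of c] unfolding e
      by (rule kspan_eq) (simp only: Ext_rules)
  qed
qed

lemma tens3_cm:
  fixes t :: "'a \<times> 'b \<times> 'd \<Rightarrow> 'c list" and G' :: "('c \<Rightarrow> 'k::comm_ring_1) set"
  assumes A1: "\<And>a a' b d. a \<in> carr M \<Longrightarrow> a' \<in> carr M \<Longrightarrow> b \<in> carr N \<Longrightarrow> d \<in> carr P \<Longrightarrow>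
      req G' (t (addm M a a', b, d)) (t (a, b, d) @ t (a', b, d))"
  and A2: "\<And>a b b' d. a \<in> carr M \<Longrightarrow> b \<in> carr N \<Longrightarrow> b' \<in> carr N \<Longrightarrow> d \<in> carr P \<Longrightarrow>
      req G' (t (a, addm N b b', d)) (t (a, b, d) @ t (a, b', d))"
  and A3: "\<And>a b d d'. a \<in> carr M \<Longrightarrow> b \<in> carr N \<Longrightarrow> d \<in> carr P \<Longrightarrow> d' \<in> carr P \<Longrightarrow>
      req G' (t (a, b, addm P d d')) (t (a, b, d) @ t (a, b, d'))"
  and S1: "\<And>c a b d. a \<in> carr M \<Longrightarrow> b \<in> carr N \<Longrightarrow> d \<in> carr P \<Longrightarrow>
      (\<lambda>r. fr (t (smul M c a, b, d)) r - c * fr (t (a, b, d)) r) \<in> kspan G'"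
  and S2: "\<And>c a b d. a \<in> carr M \<Longrightarrow> b \<in> carr N \<Longrightarrow> d \<in> carr P \<Longrightarrow>
      (\<lambda>r. fr (t (a, smul N c b, d)) r - c * fr (t (a, b, d)) r) \<in> kspan G'"
  and S3: "\<And>c a b d. a \<in> carr M \<Longrightarrow> b \<in> carr N \<Longrightarrow> d \<in> carr P \<Longrightarrow>
      (\<lambda>r. fr (t (a, b, smul P c d)) r - c * fr (t (a, b, d)) r) \<in> kspan G'"
  and R: "req (tgens3 M N P) xs ys"
  shows "req G' (cm t xs) (cm t ys)"
proof (rule req_cm[OF _ R], intro ballI conjI)
  fix g :: "'a \<times> 'b \<times> 'd \<Rightarrow> 'k" assume g: "g \<in> tgens3 M N P"
  then show "finite {q. g q \<noteq> 0}" by (rule tgens3_fin)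
  from g show "Ext t g \<in> kspan G'" unfolding tgens3_def
  proof (elim UnE CollectE exE conjE)
    fix a a' b d assume e: "g = (\<lambda>q. dl (addm M a a', b, d) q - dl (a, b, d) q - dl (a', b, d) q)"
      and c: "a \<in> carr M" "a' \<in> carr M" "b \<in> carr N" "d \<in> carr P"
    show ?thesis using req_gen_sum[OF A1[OF c]] unfolding e
      by (rule kspan_eq) (simp only: Ext_rules)
  next
    fix a b b' d assume e: "g = (\<lambda>q. dl (a, addm N b b', d) q - dl (a, b, d) q - dl (a, b', d) q)"
      and c: "a \<in> carr M" "b \<in> carr N" "b' \<in> carr N" "d \<in> carr P"
    show ?thesis using req_gen_sum[OF A2[OF c]] unfolding e
      by (rule kspan_eq) (simp only: Ext_rules)
  next
    fix a b d d' assume e: "g = (\<lambda>q. dl (a, b, addm P d d') q - dl (a, b, d) q - dl (a, b, d') q)"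
      and c: "a \<in> carr M" "b \<in> carr N" "d \<in> carr P" "d' \<in> carr P"
    show ?thesis using req_gen_sum[OF A3[OF c]] unfolding e
      by (rule kspan_eq) (simp only: Ext_rules)
  next
    fix c a b d assume e: "g = (\<lambda>q. dl (smul M c a, b, d) q - c * dl (a, b, d) q)"
      and h: "a \<in> carr M" "b \<in> carr N" "d \<in> carr P"
    show ?thesis using S1[OF h, of c] unfolding e
      by (rule kspan_eq) (simp only: Ext_rules)
  next
    fix c a b d assume e: "g = (\<lambda>q. dl (a, smul N c b, d) q - c * dl (a, b, d) q)"
      and h: "a \<in> carr M" "b \<in> carr N" "d \<in> carr P"
    show ?thesis using S2[OF h, of c] unfolding e
      by (rule kspan_eq) (simp only: Ext_rules)
  next
    fix c a b d assume e: "g = (\<lambda>q. dl (a, b, smul P c d) q - c * dl (a, b, d) q)"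
      and h: "a \<in> carr M" "b \<in> carr N" "d \<in> carr P"
    show ?thesis using S3[OF h, of c] unfolding e
      by (rule kspan_eq) (simp only: Ext_rules)
  qed
qed


lemma msum_Nil[simp]: "msum M [] = zerom M" by (simp add: msum_def)
lemma msum_Cons[simp]: "msum M (x#xs) = addm M x (msum M xs)" by (simp add: msum_def)

context
  fixes M :: "('k::comm_ring_1, 'm) kmod"
  assumes km: "kmodule M"
begin

lemma km_zero: "zerom M \<in> carr M" using km by (simp add: kmodule_def)
lemma km_add: "a \<in> carr M \<Longrightarrow> b \<in> carr M \<Longrightarrow> addm M a b \<in> carr M" using km by (simp add: kmodule_def)
lemma km_smul: "a \<in> carr M \<Longrightarrow> smul M c a \<in> carr M" using km by (simp add: kmodule_def)
lemma km_assoc: "a \<in> carr M \<Longrightarrow> b \<in> carr M \<Longrightarrow> d \<in> carr M \<Longrightarrow> addm M (addm M a b) d = addm M a (addm M b d)"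
  using km[unfolded kmodule_def, THEN conjunct2, THEN conjunct2, THEN conjunct2, THEN conjunct1] by blast
lemma km_comm: "a \<in> carr M \<Longrightarrow> b \<in> carr M \<Longrightarrow> addm M a b = addm M b a"
  using km[unfolded kmodule_def, THEN conjunct2, THEN conjunct2, THEN conjunct2, THEN conjunct2, THEN conjunct1] by blast
lemma km_zl: "a \<in> carr M \<Longrightarrow> addm M (zerom M) a = a"
  using km[unfolded kmodule_def, THEN conjunct2, THEN conjunct2, THEN conjunct2, THEN conjunct2, THEN conjunct2, THEN conjunct1] by blast
lemma km_zr: "a \<in> carr M \<Longrightarrow> addm M a (zerom M) = a" using km_zl km_comm km_zero by metis
lemma km_neg: "a \<in> carr M \<Longrightarrow> \<exists>b\<in>carr M. addm M a b = zerom M"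
  using km[unfolded kmodule_def, THEN conjunct2, THEN conjunct2, THEN conjunct2, THEN conjunct2, THEN conjunct2, THEN conjunct2, THEN conjunct1] by blast
lemma km_sdist: "a \<in> carr M \<Longrightarrow> b \<in> carr M \<Longrightarrow> smul M c (addm M a b) = addm M (smul M c a) (smul M c b)"
  using km by (simp add: kmodule_def)
lemma km_sdist2: "a \<in> carr M \<Longrightarrow> smul M (c + d) a = addm M (smul M c a) (smul M d a)"
  using km by (simp add: kmodule_def)
lemma km_smul_smul: "a \<in> carr M \<Longrightarrow> smul M (c * d) a = smul M c (smul M d a)"
  using km by (simp add: kmodule_def)
lemma km_one: "a \<in> carr M \<Longrightarrow> smul M 1 a = a" using km by (simp add: kmodule_def)

lemma km_idem: assumes "m \<in> carr M" "addm M m m = m" shows "m = zerom M"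
proof -
  obtain b where b: "b \<in> carr M" "addm M m b = zerom M" using km_neg assms by blast
  have "addm M (addm M m m) b = addm M m (addm M m b)" using km_assoc assms b by blast
  then show ?thesis using assms b km_zr by simp
qed

lemma msum_carr: "\<forall>x\<in>set xs. x \<in> carr M \<Longrightarrow> msum M xs \<in> carr M"
  by (induct xs) (auto simp: msum_def km_zero km_add)


end

lemma klinear_zero:
  assumes "kmodule M" "kmodule N" "klinear M N f" shows "f (zerom M) = zerom N"
proof -
  have z: "zerom M \<in> carr M" by (rule km_zero[OF assms(1)])
  have "f (addm M (zerom M) (zerom M)) = addm N (f (zerom M)) (f (zerom M))"
    using assms(3) z by (simp add: klinear_def)
  moreover have "addm M (zerom M) (zerom M) = zerom M" using km_zl[OF assms(1) z] .
  moreover have "f (zerom M) \<in> carr N" using assms(3) z by (simp add: klinear_def)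
  ultimately show ?thesis using km_idem[OF assms(2)] by metis
qed

lemma klinear_msum:
  assumes "kmodule M" "kmodule N" "klinear M N f" "\<forall>x\<in>set xs. x \<in> carr M"
  shows "f (msum M xs) = msum N (map f xs)"
  using assms(4)
proof (induct xs)
  case Nil then show ?case using klinear_zero[OF assms(1-3)] by simp
next
  case (Cons x xs)
  then show ?case using assms(3) msum_carr[OF assms(1)] by (simp add: klinear_def)
qed

section \<open>Elementary tensor relations\<close>

context
  fixes M :: "('k::comm_ring_1, 'm) kmod" and N :: "('k, 'n) kmod"
begin

abbreviation "TG \<equiv> tgens M N"

lemma g_add1: "a \<in> carr M \<Longrightarrow> a' \<in> carr M \<Longrightarrow> b \<in> carr N \<Longrightarrow> req TG [(addm M a a', b)] [(a, b), (a', b)]"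
  unfolding req_def
  by (rule kspan_eq[OF kspan_gen[of "\<lambda>q. dl (addm M a a', b) q - dl (a, b) q - dl (a', b) q"]])
     (auto simp: tgens_def dl_eq)
lemma g_add2: "a \<in> carr M \<Longrightarrow> b \<in> carr N \<Longrightarrow> b' \<in> carr N \<Longrightarrow> req TG [(a, addm N b b')] [(a, b), (a, b')]"
  unfolding req_def
  by (rule kspan_eq[OF kspan_gen[of "\<lambda>q. dl (a, addm N b b') q - dl (a, b) q - dl (a, b') q"]])
     (auto simp: tgens_def dl_eq)
lemma g_sm1: "a \<in> carr M \<Longrightarrow> b \<in> carr N \<Longrightarrow> (\<lambda>r. fr [(smul M c a, b)] r - c * fr [(a, b)] r) \<in> kspan TG"
  by (rule kspan_eq[OF kspan_gen[of "\<lambda>q. dl (smul M c a, b) q - c * dl (a, b) q"]])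
     (auto simp: tgens_def dl_eq)
lemma g_sm2: "a \<in> carr M \<Longrightarrow> b \<in> carr N \<Longrightarrow> (\<lambda>r. fr [(a, smul N c b)] r - c * fr [(a, b)] r) \<in> kspan TG"
  by (rule kspan_eq[OF kspan_gen[of "\<lambda>q. dl (a, smul N c b) q - c * dl (a, b) q"]])
     (auto simp: tgens_def dl_eq)

lemma split1:
  assumes "\<forall>x\<in>set L. F1 x \<in> carr M \<and> F2 x \<in> carr M \<and> G x \<in> carr N"
  shows "req TG (map (\<lambda>x. (addm M (F1 x) (F2 x), G x)) L) (map (\<lambda>x. (F1 x, G x)) L @ map (\<lambda>x. (F2 x, G x)) L)"
  using assms
proof (induct L)
  case Nil then show ?case by (simp add: req_refl)
next
  case (Cons x L)
  have "req TG ([(addm M (F1 x) (F2 x), G x)] @ map (\<lambda>x. (addm M (F1 x) (F2 x), G x)) L)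
     ([(F1 x, G x), (F2 x, G x)] @ (map (\<lambda>x. (F1 x, G x)) L @ map (\<lambda>x. (F2 x, G x)) L))"
    using Cons by (intro req_app g_add1) auto
  then show ?case by (rule req_fr_cong) (auto simp: algebra_simps)
qed

lemma split2:
  assumes "\<forall>x\<in>set L. F x \<in> carr M \<and> G1 x \<in> carr N \<and> G2 x \<in> carr N"
  shows "req TG (map (\<lambda>x. (F x, addm N (G1 x) (G2 x))) L) (map (\<lambda>x. (F x, G1 x)) L @ map (\<lambda>x. (F x, G2 x)) L)"
  using assms
proof (induct L)
  case Nil then show ?case by (simp add: req_refl)
next
  case (Cons x L)
  have "req TG ([(F x, addm N (G1 x) (G2 x))] @ map (\<lambda>x. (F x, addm N (G1 x) (G2 x))) L)
     ([(F x, G1 x), (F x, G2 x)] @ (map (\<lambda>x. (F x, G1 x)) L @ map (\<lambda>x. (F x, G2 x)) L))"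
    using Cons by (intro req_app g_add2) auto
  then show ?case by (rule req_fr_cong) (auto simp: algebra_simps)
qed

lemma scal1:
  assumes "\<forall>x\<in>set L. F x \<in> carr M \<and> G x \<in> carr N"
  shows "(\<lambda>r. fr (map (\<lambda>x. (smul M c (F x), G x)) L) r - c * fr (map (\<lambda>x. (F x, G x)) L) r) \<in> kspan TG"
  using assms
proof (induct L)
  case Nil then show ?case by (simp add: kspan_0)
next
  case (Cons x L)
  have "(\<lambda>r. (fr [(smul M c (F x), G x)] r - c * fr [(F x, G x)] r) +
      (fr (map (\<lambda>x. (smul M c (F x), G x)) L) r - c * fr (map (\<lambda>x. (F x, G x)) L) r)) \<in> kspan TG"
    using Cons by (intro kspan_add g_sm1) auto
  then show ?case by (rule kspan_eq) (simp add: algebra_simps)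
qed

lemma scal2:
  assumes "\<forall>x\<in>set L. F x \<in> carr M \<and> G x \<in> carr N"
  shows "(\<lambda>r. fr (map (\<lambda>x. (F x, smul N c (G x))) L) r - c * fr (map (\<lambda>x. (F x, G x)) L) r) \<in> kspan TG"
  using assms
proof (induct L)
  case Nil then show ?case by (simp add: kspan_0)
next
  case (Cons x L)
  have "(\<lambda>r. (fr [(F x, smul N c (G x))] r - c * fr [(F x, G x)] r) +
      (fr (map (\<lambda>x. (F x, smul N c (G x))) L) r - c * fr (map (\<lambda>x. (F x, G x)) L) r)) \<in> kspan TG"
    using Cons by (intro kspan_add g_sm2) auto
  then show ?case by (rule kspan_eq) (simp add: algebra_simps)
qed

lemma scal_swap:
  assumes "\<forall>x\<in>set L. F x \<in> carr M \<and> G x \<in> carr N"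
  shows "req TG (map (\<lambda>x. (smul M c (F x), G x)) L) (map (\<lambda>x. (F x, smul N c (G x))) L)"
  unfolding req_def using kspan_diff[OF scal1[OF assms, of c] scal2[OF assms, of c]]
  by (rule kspan_eq) simp

lemma req_scal_cong:
  assumes "(\<lambda>r. fr X r - c * fr Y r) \<in> kspan TG" "req TG X' X" "req TG Y Y'"
  shows "(\<lambda>r. fr X' r - c * fr Y' r) \<in> kspan TG"
proof -
  have "(\<lambda>r. 1 * ((\<lambda>r. 1 * (fr X' r - fr X r) + 1 * (fr X r - c * fr Y r)) r) + c * (fr Y r - fr Y' r)) \<in> kspan TG"
    using assms unfolding req_def by (intro kspan_comb) auto
  then show ?thesis by (rule kspan_eq) (simp add: algebra_simps)
qed

lemma zero1: assumes "kmodule M" "b \<in> carr N" shows "req TG [(zerom M, b)] []"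
proof -
  have z: "zerom M \<in> carr M" by (rule km_zero[OF assms(1)])
  have "req TG [(addm M (zerom M) (zerom M), b)] [(zerom M, b), (zerom M, b)]" using g_add1 z assms by blast
  then have "req TG [(zerom M, b)] [(zerom M, b), (zerom M, b)]" using km_zl[OF assms(1) z] by simp
  then have "req TG [(zerom M, b), (zerom M, b)] [(zerom M, b)]" by (rule req_sym)
  then show ?thesis unfolding req_def by (rule kspan_eq) (simp add: algebra_simps)
qed

lemma zero2: assumes "kmodule N" "a \<in> carr M" shows "req TG [(a, zerom N)] []"
proof -
  have z: "zerom N \<in> carr N" by (rule km_zero[OF assms(1)])
  have "req TG [(a, addm N (zerom N) (zerom N))] [(a, zerom N), (a, zerom N)]" using g_add2 z assms by blast
  then have "req TG [(a, zerom N)] [(a, zerom N), (a, zerom N)]" using km_zl[OF assms(1) z] by simp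
  then have "req TG [(a, zerom N), (a, zerom N)] [(a, zerom N)]" by (rule req_sym)
  then show ?thesis unfolding req_def by (rule kspan_eq) (simp add: algebra_simps)
qed

lemma msum1:
  assumes "kmodule M" "\<forall>x\<in>set L. F x \<in> carr M" "b \<in> carr N"
  shows "req TG [(msum M (map F L), b)] (map (\<lambda>x. (F x, b)) L)"
  using assms(2)
proof (induct L)
  case Nil then show ?case using zero1[OF assms(1,3)] by simp
next
  case (Cons x L)
  have c: "msum M (map F L) \<in> carr M" using msum_carr[OF assms(1)] Cons by auto
  have "req TG [(addm M (F x) (msum M (map F L)), b)] ([(F x, b)] @ [(msum M (map F L), b)])"
    using g_add1 c Cons assms by simp
  moreover have "req TG ([(F x, b)] @ [(msum M (map F L), b)]) ([(F x, b)] @ map (\<lambda>x. (F x, b)) L)"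
    using Cons by (intro req_app req_refl) auto
  ultimately show ?case by (simp add: req_trans)
qed

lemma msum2:
  assumes "kmodule N" "\<forall>x\<in>set L. G x \<in> carr N" "a \<in> carr M"
  shows "req TG [(a, msum N (map G L))] (map (\<lambda>x. (a, G x)) L)"
  using assms(2)
proof (induct L)
  case Nil then show ?case using zero2[OF assms(1,3)] by simp
next
  case (Cons x L)
  have c: "msum N (map G L) \<in> carr N" using msum_carr[OF assms(1)] Cons by auto
  have "req TG [(a, addm N (G x) (msum N (map G L)))] ([(a, G x)] @ [(a, msum N (map G L))])"
    using g_add2 c Cons assms by simp
  moreover have "req TG ([(a, G x)] @ [(a, msum N (map G L))]) ([(a, G x)] @ map (\<lambda>x. (a, G x)) L)"
    using Cons by (intro req_app req_refl) auto
  ultimately show ?case by (simp add: req_trans)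
qed

end

lemma map_req:
  fixes f :: "'a \<Rightarrow> 'c" and g :: "'b \<Rightarrow> 'd" and M :: "('k::comm_ring_1, 'a) kmod"
  assumes f: "klinear M M' f" and g: "klinear N N' g"
    and R: "req (tgens M N) xs ys"
  shows "req (tgens M' N') (map (\<lambda>(u, v). (f u, g v)) xs) (map (\<lambda>(u, v). (f u, g v)) ys)"
proof -
  let ?t = "\<lambda>(u, v). [(f u, g v)]"
  have e: "\<And>zs. map (\<lambda>(u, v). (f u, g v)) zs = cm ?t zs" by (induct_tac zs) auto
  have "req (tgens M' N') (cm ?t xs) (cm ?t ys)"
  proof (rule tens_cm[OF _ _ _ _ R])
    fix a a' b assume c: "a \<in> carr M" "a' \<in> carr M" "b \<in> carr N"
    then show "req (tgens M' N') (?t (addm M a a', b)) (?t (a, b) @ ?t (a', b))"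
      using f g g_add1[of "f a" M' "f a'" "g b" N'] by (simp add: klinear_def)
  next
    fix a b b' assume c: "a \<in> carr M" "b \<in> carr N" "b' \<in> carr N"
    then show "req (tgens M' N') (?t (a, addm N b b')) (?t (a, b) @ ?t (a, b'))"
      using f g g_add2[of "f a" M' "g b" N' "g b'"] by (simp add: klinear_def)
  next
    fix c a b assume h: "a \<in> carr M" "b \<in> carr N"
    then show "(\<lambda>r. fr (?t (smul M c a, b)) r - c * fr (?t (a, b)) r) \<in> kspan (tgens M' N')"
      using f g g_sm1[of "f a" M' "g b" N' c] by (simp add: klinear_def)
  next
    fix c a b assume h: "a \<in> carr M" "b \<in> carr N"
    then show "(\<lambda>r. fr (?t (a, smul N c b)) r - c * fr (?t (a, b)) r) \<in> kspan (tgens M' N')"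
      using f g g_sm2[of "f a" M' "g b" N' c] by (simp add: klinear_def)
  qed
  then show ?thesis by (simp add: e)
qed

lemma klinear_id: "klinear M M id" by (simp add: klinear_def)


section \<open>Linear categories\<close>

context fixes K :: "('x, 'k::comm_ring_1, 'm) kcat" assumes kc: "klinear_category K"
begin
lemma kc_mod: "kmodule (hom K x y)" using kc by (simp add: klinear_category_def)
lemma kc_comp: "a \<in> carr (hom K x y) \<Longrightarrow> b \<in> carr (hom K y z) \<Longrightarrow> comp K x y z a b \<in> carr (hom K x z)"
  using kc by (simp add: klinear_category_def)
lemma kc_addl: "a \<in> carr (hom K x y) \<Longrightarrow> a' \<in> carr (hom K x y) \<Longrightarrow> b \<in> carr (hom K y z) \<Longrightarrow>
   comp K x y z (addm (hom K x y) a a') b = addm (hom K x z) (comp K x y z a b) (comp K x y z a' b)"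
  using kc by (simp add: klinear_category_def)
lemma kc_addr: "a \<in> carr (hom K x y) \<Longrightarrow> b \<in> carr (hom K y z) \<Longrightarrow> b' \<in> carr (hom K y z) \<Longrightarrow>
   comp K x y z a (addm (hom K y z) b b') = addm (hom K x z) (comp K x y z a b) (comp K x y z a b')"
  using kc by (simp add: klinear_category_def)
lemma kc_smull: "a \<in> carr (hom K x y) \<Longrightarrow> b \<in> carr (hom K y z) \<Longrightarrow>
   comp K x y z (smul (hom K x y) c a) b = smul (hom K x z) c (comp K x y z a b)"
  using kc by (simp add: klinear_category_def)
lemma kc_smulr: "a \<in> carr (hom K x y) \<Longrightarrow> b \<in> carr (hom K y z) \<Longrightarrow>
   comp K x y z a (smul (hom K y z) c b) = smul (hom K x z) c (comp K x y z a b)"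
  using kc by (simp add: klinear_category_def)
lemma kc_assoc: "a \<in> carr (hom K x y) \<Longrightarrow> b \<in> carr (hom K y z) \<Longrightarrow> d \<in> carr (hom K z w) \<Longrightarrow>
   comp K x z w (comp K x y z a b) d = comp K x y w a (comp K y z w b d)"
  using kc by (simp add: klinear_category_def)
lemma kc_id: "ident K x \<in> carr (hom K x x)" using kc by (simp add: klinear_category_def)
lemma kc_idl: "a \<in> carr (hom K x y) \<Longrightarrow> comp K x x y (ident K x) a = a" using kc by (simp add: klinear_category_def)
lemma kc_idr: "a \<in> carr (hom K x y) \<Longrightarrow> comp K x y y a (ident K y) = a" using kc by (simp add: klinear_category_def)

lemma kc_linl: "a \<in> carr (hom K x y) \<Longrightarrow> klinear (hom K y z) (hom K x z) (comp K x y z a)"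
  by (simp add: klinear_def kc_comp kc_addr kc_smulr)
lemma kc_linr: "b \<in> carr (hom K y z) \<Longrightarrow> klinear (hom K x y) (hom K x z) (\<lambda>a. comp K x y z a b)"
  by (simp add: klinear_def kc_comp kc_addl kc_smull)
end

section \<open>Comodules\<close>

context fixes M :: "('k::comm_ring_1, 'a) kmod" and C :: "('k, 'h) kmod" and \<Delta> \<epsilon> \<rho>
  assumes cm: "kcomodule M C \<Delta> \<epsilon> \<rho>"
begin
lemma co_mod: "kmodule M" using cm by (simp add: kcomodule_def)
lemma co_in: "m \<in> carr M \<Longrightarrow> in_tens M C (\<rho> m)" using cm by (simp add: kcomodule_def)
lemma co_add: "m \<in> carr M \<Longrightarrow> n \<in> carr M \<Longrightarrow> req (tgens M C) (\<rho> (addm M m n)) (\<rho> m @ \<rho> n)"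
  using cm by (simp add: kcomodule_def teq_req)
lemma co_smul: "m \<in> carr M \<Longrightarrow> req (tgens M C) (\<rho> (smul M c m)) (map (\<lambda>(a, h). (smul M c a, h)) (\<rho> m))"
  using cm by (simp add: kcomodule_def teq_req)
lemma co_coassoc: "m \<in> carr M \<Longrightarrow> req (tgens3 M C C)
        (cm (\<lambda>(a, h). map (\<lambda>(p, q). (p, q, h)) (\<rho> a)) (\<rho> m))
        (cm (\<lambda>(a, h). map (\<lambda>(p, q). (a, p, q)) (\<Delta> h)) (\<rho> m))"
  using cm by (simp add: kcomodule_def teq3_req cm_def)
lemma co_counit: "m \<in> carr M \<Longrightarrow> msum M (map (\<lambda>(a, h). smul M (\<epsilon> h) a) (\<rho> m)) = m"
  using cm by (simp add: kcomodule_def)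
lemma co_in1: "m \<in> carr M \<Longrightarrow> p \<in> set (\<rho> m) \<Longrightarrow> fst p \<in> carr M \<and> snd p \<in> carr C"
  using co_in unfolding in_tens_def by fastforce
end


lemma scal_swapv:
  fixes M :: "('k::comm_ring_1, 'm) kmod" and N :: "('k, 'n) kmod"
  assumes "\<forall>x\<in>set L. F x \<in> carr M \<and> G x \<in> carr N"
  shows "req (tgens M N) (map (\<lambda>x. (smul M (cf x) (F x), G x)) L) (map (\<lambda>x. (F x, smul N (cf x) (G x))) L)"
  using assms
proof (induct L)
  case Nil then show ?case by (simp add: req_refl)
next
  case (Cons x L)
  have "req (tgens M N) [(smul M (cf x) (F x), G x)] [(F x, smul N (cf x) (G x))]"
    unfolding req_def using Cons kspan_diff[OF g_sm1[of "F x" M "G x" N "cf x"] g_sm2[of "F x" M "G x" N "cf x"]]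
    by (auto elim: kspan_eq)
  then show ?case using Cons req_app[of _ "[_]" "[_]"] by simp
qed

lemma tri_req:
  fixes P :: "'a \<Rightarrow> 'c" and M :: "('k::comm_ring_1, 'a) kmod"
  assumes mods: "kmodule M'" "kmodule N''"
    and P: "klinear M M' P"
    and Q1: "\<And>w. w \<in> carr P3 \<Longrightarrow> klinear N N'' (\<lambda>v. Q v w)"
    and Q2: "\<And>v. v \<in> carr N \<Longrightarrow> klinear P3 N'' (Q v)"
    and R: "req (tgens3 M N P3) xs ys"
  shows "req (tgens M' N'') (cm (\<lambda>(u, v, w). [(P u, Q v w)]) xs) (cm (\<lambda>(u, v, w). [(P u, Q v w)]) ys)"
proof (rule tens3_cm[OF _ _ _ _ _ _ R])
  fix a a' b d assume c: "a \<in> carr M" "a' \<in> carr M" "b \<in> carr N" "d \<in> carr P3"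
  then show "req (tgens M' N'') ((\<lambda>(u, v, w). [(P u, Q v w)]) (addm M a a', b, d))
        ((\<lambda>(u, v, w). [(P u, Q v w)]) (a, b, d) @ (\<lambda>(u, v, w). [(P u, Q v w)]) (a', b, d))"
    using P Q1[of d] g_add1[of "P a" M' "P a'" "Q b d" N''] by (simp add: klinear_def)
next
  fix a b b' d assume c: "a \<in> carr M" "b \<in> carr N" "b' \<in> carr N" "d \<in> carr P3"
  then show "req (tgens M' N'') ((\<lambda>(u, v, w). [(P u, Q v w)]) (a, addm N b b', d))
        ((\<lambda>(u, v, w). [(P u, Q v w)]) (a, b, d) @ (\<lambda>(u, v, w). [(P u, Q v w)]) (a, b', d))"
    using P Q1[of d] g_add2[of "P a" M' "Q b d" N'' "Q b' d"] by (simp add: klinear_def)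
next
  fix a b d d' assume c: "a \<in> carr M" "b \<in> carr N" "d \<in> carr P3" "d' \<in> carr P3"
  then show "req (tgens M' N'') ((\<lambda>(u, v, w). [(P u, Q v w)]) (a, b, addm P3 d d'))
        ((\<lambda>(u, v, w). [(P u, Q v w)]) (a, b, d) @ (\<lambda>(u, v, w). [(P u, Q v w)]) (a, b, d'))"
    using P Q2[of b] g_add2[of "P a" M' "Q b d" N'' "Q b d'"] by (simp add: klinear_def)
next
  fix c a b d assume h: "a \<in> carr M" "b \<in> carr N" "d \<in> carr P3"
  then show "(\<lambda>r. fr ((\<lambda>(u, v, w). [(P u, Q v w)]) (smul M c a, b, d)) r - c * fr ((\<lambda>(u, v, w). [(P u, Q v w)]) (a, b, d)) r) \<in> kspan (tgens M' N'')"
    using P Q1[of d] g_sm1[of "P a" M' "Q b d" N'' c] by (simp add: klinear_def)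
next
  fix c a b d assume h: "a \<in> carr M" "b \<in> carr N" "d \<in> carr P3"
  then show "(\<lambda>r. fr ((\<lambda>(u, v, w). [(P u, Q v w)]) (a, smul N c b, d)) r - c * fr ((\<lambda>(u, v, w). [(P u, Q v w)]) (a, b, d)) r) \<in> kspan (tgens M' N'')"
    using P Q1[of d] g_sm2[of "P a" M' "Q b d" N'' c] by (simp add: klinear_def)
next
  fix c a b d assume h: "a \<in> carr M" "b \<in> carr N" "d \<in> carr P3"
  then show "(\<lambda>r. fr ((\<lambda>(u, v, w). [(P u, Q v w)]) (a, b, smul P3 c d)) r - c * fr ((\<lambda>(u, v, w). [(P u, Q v w)]) (a, b, d)) r) \<in> kspan (tgens M' N'')"
    using P Q2[of b] Q1[of d] g_sm2[of "P a" M' "Q b d" N'' c] by (simp add: klinear_def)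
qed

lemma bil_req:
  fixes \<Phi> :: "'h \<Rightarrow> 'g \<Rightarrow> 'g2" and M :: "('k::comm_ring_1, 'a) kmod"
  assumes co: "kcomodule M C \<Delta> \<epsilon> \<rho>"
    and P1: "\<And>g. g \<in> carr N \<Longrightarrow> klinear C N' (\<lambda>h. \<Phi> h g)"
    and P2: "\<And>h. h \<in> carr C \<Longrightarrow> klinear N N' (\<Phi> h)"
    and R: "req (tgens M N) xs ys"
  shows "req (tgens M N') (cm (\<lambda>(c, g). map (\<lambda>(c0, c1). (c0, \<Phi> c1 g)) (\<rho> c)) xs)
                          (cm (\<lambda>(c, g). map (\<lambda>(c0, c1). (c0, \<Phi> c1 g)) (\<rho> c)) ys)"
proof (rule tens_cm[OF _ _ _ _ R])
  let ?t = "\<lambda>(c, g). map (\<lambda>(c0, c1). (c0, \<Phi> c1 g)) (\<rho> c)"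
  fix a a' b assume c: "a \<in> carr M" "a' \<in> carr M" "b \<in> carr N"
  have "req (tgens M N') (map (\<lambda>(u, v). (id u, \<Phi> v b)) (\<rho> (addm M a a')))
            (map (\<lambda>(u, v). (id u, \<Phi> v b)) (\<rho> a @ \<rho> a'))"
    by (rule map_req[OF klinear_id P1[OF c(3)] co_add[OF co c(1,2)]])
  then show "req (tgens M N') (?t (addm M a a', b)) (?t (a, b) @ ?t (a', b))" by simp
next
  let ?t = "\<lambda>(c, g). map (\<lambda>(c0, c1). (c0, \<Phi> c1 g)) (\<rho> c)"
  fix a b b' assume c: "a \<in> carr M" "b \<in> carr N" "b' \<in> carr N"
  have e: "?t (a, addm N b b') = map (\<lambda>x. (fst x, addm N' (\<Phi> (snd x) b) (\<Phi> (snd x) b'))) (\<rho> a)"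
    using P2 co_in1[OF co c(1)] c by (auto simp: klinear_def split_def)
  have "req (tgens M N') (map (\<lambda>x. (fst x, addm N' (\<Phi> (snd x) b) (\<Phi> (snd x) b'))) (\<rho> a))
     (map (\<lambda>x. (fst x, \<Phi> (snd x) b)) (\<rho> a) @ map (\<lambda>x. (fst x, \<Phi> (snd x) b')) (\<rho> a))"
    by (rule split2) (use P2 co_in1[OF co c(1)] c in \<open>auto simp: klinear_def\<close>)
  then show "req (tgens M N') (?t (a, addm N b b')) (?t (a, b) @ ?t (a, b'))" unfolding e by (simp add: split_def)
next
  let ?t = "\<lambda>(c, g). map (\<lambda>(c0, c1). (c0, \<Phi> c1 g)) (\<rho> c)"
  fix s a b assume h: "a \<in> carr M" "b \<in> carr N"
  have r1: "req (tgens M N') (map (\<lambda>(u, v). (id u, \<Phi> v b)) (\<rho> (smul M s a)))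
            (map (\<lambda>(u, v). (id u, \<Phi> v b)) (map (\<lambda>(a, h). (smul M s a, h)) (\<rho> a)))"
    by (rule map_req[OF klinear_id P1[OF h(2)] co_smul[OF co h(1)]])
  have "(\<lambda>r. fr (map (\<lambda>x. (smul M s (fst x), \<Phi> (snd x) b)) (\<rho> a)) r - s * fr (map (\<lambda>x. (fst x, \<Phi> (snd x) b)) (\<rho> a)) r) \<in> kspan (tgens M N')"
    by (rule scal1) (use P1 co_in1[OF co h(1)] h in \<open>auto simp: klinear_def\<close>)
  then show "(\<lambda>r. fr (?t (smul M s a, b)) r - s * fr (?t (a, b)) r) \<in> kspan (tgens M N')"
    by (rule req_scal_cong) (use r1 in \<open>auto simp: split_def req_refl o_def\<close>)
next
  let ?t = "\<lambda>(c, g). map (\<lambda>(c0, c1). (c0, \<Phi> c1 g)) (\<rho> c)"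
  fix s a b assume h: "a \<in> carr M" "b \<in> carr N"
  have e: "?t (a, smul N s b) = map (\<lambda>x. (fst x, smul N' s (\<Phi> (snd x) b))) (\<rho> a)"
    using P2 co_in1[OF co h(1)] h by (auto simp: klinear_def split_def)
  have "(\<lambda>r. fr (map (\<lambda>x. (fst x, smul N' s (\<Phi> (snd x) b))) (\<rho> a)) r - s * fr (map (\<lambda>x. (fst x, \<Phi> (snd x) b)) (\<rho> a)) r) \<in> kspan (tgens M N')"
    by (rule scal2) (use P1 co_in1[OF co h(1)] h in \<open>auto simp: klinear_def\<close>)
  then show "(\<lambda>r. fr (?t (a, smul N s b)) r - s * fr (?t (a, b)) r) \<in> kspan (tgens M N')"
    unfolding e by (simp add: split_def)
qed

lemma counit_contract:
  fixes M :: "('k::comm_ring_1, 'a) kmod" and P :: "'a \<Rightarrow> 'b"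
  assumes co: "kcomodule M C \<Delta> \<epsilon> \<rho>" and mods: "kmodule M'" "kmodule N"
    and P: "klinear M M' P" and c: "c \<in> carr M" and g: "g \<in> carr N"
  shows "req (tgens M' N) (map (\<lambda>(c0, c1). (P c0, smul N (\<epsilon> c1) g)) (\<rho> c)) [(P c, g)]"
proof -
  have in1: "\<forall>x\<in>set (\<rho> c). fst x \<in> carr M \<and> snd x \<in> carr C" using co_in1[OF co c] by blast
  have "req (tgens M' N) (map (\<lambda>x. (P (fst x), smul N (\<epsilon> (snd x)) g)) (\<rho> c))
          (map (\<lambda>x. (smul M' (\<epsilon> (snd x)) (P (fst x)), g)) (\<rho> c))"
    by (rule req_sym, rule scal_swapv) (use in1 P g km_smul[OF mods(1)] in \<open>auto simp: klinear_def\<close>)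
  also have "map (\<lambda>x. (smul M' (\<epsilon> (snd x)) (P (fst x)), g)) (\<rho> c)
     = map (\<lambda>x. (P (smul M (\<epsilon> (snd x)) (fst x)), g)) (\<rho> c)"
    using in1 P by (auto simp: klinear_def)
  finally have 1: "req (tgens M' N) (map (\<lambda>x. (P (fst x), smul N (\<epsilon> (snd x)) g)) (\<rho> c))
          (map (\<lambda>x. (P (smul M (\<epsilon> (snd x)) (fst x)), g)) (\<rho> c))" .
  have 2: "req (tgens M' N) [(msum M' (map (\<lambda>x. P (smul M (\<epsilon> (snd x)) (fst x))) (\<rho> c)), g)]
     (map (\<lambda>x. (P (smul M (\<epsilon> (snd x)) (fst x)), g)) (\<rho> c))"
    by (rule msum1[OF mods(1) _ g]) (use in1 P km_smul[OF co_mod[OF co]] km_smul[OF mods(1)] in \<open>auto simp: klinear_def\<close>)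
  have "msum M' (map (\<lambda>x. P (smul M (\<epsilon> (snd x)) (fst x))) (\<rho> c))
     = msum M' (map P (map (\<lambda>(a, h). smul M (\<epsilon> h) a) (\<rho> c)))" by (simp add: split_def o_def)
  also have "\<dots> = P (msum M (map (\<lambda>(a, h). smul M (\<epsilon> h) a) (\<rho> c)))"
    by (rule klinear_msum[OF co_mod[OF co] mods(1) P, symmetric]) (use in1 km_smul[OF co_mod[OF co]] in auto)
  also have "\<dots> = P c" using co_counit[OF co c] by simp
  finally have 3: "msum M' (map (\<lambda>x. P (smul M (\<epsilon> (snd x)) (fst x))) (\<rho> c)) = P c" .
  show ?thesis using req_trans[OF 1 req_sym[OF 2]] 3 by (simp add: split_def)
qed


lemma klinear_comp: "klinear M N f \<Longrightarrow> klinear N P g \<Longrightarrow> klinear M P (\<lambda>v. g (f v))"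
  by (simp add: klinear_def)

locale HS =
  fixes H :: "('x, 'k::comm_ring_1, 'h) kcat" and \<Delta> :: "'x \<Rightarrow> 'x \<Rightarrow> 'h \<Rightarrow> ('h \<times> 'h) list"
    and \<epsilon> :: "'x \<Rightarrow> 'x \<Rightarrow> 'h \<Rightarrow> 'k" and S :: "'x \<Rightarrow> 'x \<Rightarrow> 'h \<Rightarrow> 'h"
    and A :: "('x, 'k, 'a) kcat" and \<rho> :: "'x \<Rightarrow> 'x \<Rightarrow> 'a \<Rightarrow> ('a \<times> 'h) list"
  assumes hopf: "hopf_category H \<Delta> \<epsilon> S"
    and sbij: "\<forall>x y. bij_betw (S x y) (carr (hom H x y)) (carr (hom H y x))"
    and com: "comodule_category H \<Delta> \<epsilon> A \<rho>"
begin

lemma kcH: "klinear_category H" using hopf by (simp add: hopf_category_def semi_hopf_category_def)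
lemma kcA: "klinear_category A" using com by (simp add: comodule_category_def)
lemma coalg: "kcoalgebra (hom H x y) (\<Delta> x y) (\<epsilon> x y)" using hopf by (simp add: hopf_category_def semi_hopf_category_def)
lemma Din: "h \<in> carr (hom H x y) \<Longrightarrow> p \<in> set (\<Delta> x y h) \<Longrightarrow> fst p \<in> carr (hom H x y) \<and> snd p \<in> carr (hom H x y)"
  using coalg[of x y] unfolding kcoalgebra_def in_tens_def by fastforce
lemma Slin: "klinear (hom H x y) (hom H y x) (S x y)" using hopf by (simp add: hopf_category_def)
lemma Sc: "h \<in> carr (hom H x y) \<Longrightarrow> S x y h \<in> carr (hom H y x)" using Slin by (simp add: klinear_def)
lemma ant1: "h \<in> carr (hom H x y) \<Longrightarrow>
   msum (hom H x x) (map (\<lambda>(u, v). comp H x y x u (S x y v)) (\<Delta> x y h)) = smul (hom H x x) (\<epsilon> x y h) (ident H x)"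
  using hopf by (simp add: hopf_category_def)
lemma ant2: "h \<in> carr (hom H x y) \<Longrightarrow>
   msum (hom H y y) (map (\<lambda>(u, v). comp H y x y (S x y u) v) (\<Delta> x y h)) = smul (hom H y y) (\<epsilon> x y h) (ident H y)"
  using hopf by (simp add: hopf_category_def)
lemma coA: "kcomodule (hom A x y) (hom H x y) (\<Delta> x y) (\<epsilon> x y) (\<rho> x y)"
  using com by (simp add: comodule_category_def)
lemma rho_mult: "a \<in> carr (hom A x y) \<Longrightarrow> b \<in> carr (hom A y z) \<Longrightarrow>
   req (tgens (hom A x z) (hom H x z)) (\<rho> x z (comp A x y z a b))
     (cm (\<lambda>(a0, a1). map (\<lambda>(b0, b1). (comp A x y z a0 b0, comp H x y z a1 b1)) (\<rho> y z b)) (\<rho> x y a))"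
  using com by (simp add: comodule_category_def teq_req cm_def)

lemmas HM = kc_mod[OF kcH] and AM = kc_mod[OF kcA]
lemmas Hc = kc_comp[OF kcH] and Ac = kc_comp[OF kcA]
lemmas rin = co_in1[OF coA]

definition bet :: "'x \<Rightarrow> 'x \<Rightarrow> 'x \<Rightarrow> ('a \<times> 'h) list \<Rightarrow> ('a \<times> 'h) list" where
  "bet z y x xs = cm (\<lambda>(c, g). map (\<lambda>(c0, c1). (c0, comp H z y x c1 g)) (\<rho> z y c)) xs"
definition bet' :: "'x \<Rightarrow> 'x \<Rightarrow> 'x \<Rightarrow> ('a \<times> 'h) list \<Rightarrow> ('a \<times> 'h) list" where
  "bet' z y x xs = cm (\<lambda>(c, h). map (\<lambda>(c0, c1). (c0, comp H y z x (S z y c1) h)) (\<rho> z y c)) xs"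

lemma C2:
  assumes c: "c \<in> carr (hom A z y)" and g: "g \<in> carr (hom H y x)"
  shows "req (tgens (hom A z y) (hom H y x)) (bet' z y x (bet z y x [(c, g)])) [(c, g)]"
proof -
  let ?Q = "\<lambda>v w. comp H y z x (S z y v) (comp H z y x w g)"
  let ?\<tau> = "\<lambda>(u, v, w). [(id u, ?Q v w)]"
  have e1: "bet' z y x (bet z y x [(c, g)]) = cm ?\<tau> (cm (\<lambda>(a, h). map (\<lambda>(p, q). (p, q, h)) (\<rho> z y a)) (\<rho> z y c))"
    by (simp add: bet_def bet'_def cm_cm split_def o_def cm_single map_cm)
  have r1: "req (tgens (hom A z y) (hom H y x)) (cm ?\<tau> (cm (\<lambda>(a, h). map (\<lambda>(p, q). (p, q, h)) (\<rho> z y a)) (\<rho> z y c)))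
     (cm ?\<tau> (cm (\<lambda>(a, h). map (\<lambda>(p, q). (a, p, q)) (\<Delta> z y h)) (\<rho> z y c)))"
  proof (rule tri_req[OF AM HM klinear_id])
    fix w assume w: "w \<in> carr (hom H z y)"
    show "klinear (hom H z y) (hom H y x) (\<lambda>v. ?Q v w)"
      by (rule klinear_comp[OF Slin kc_linr[OF kcH]]) (rule Hc[OF w g])
  next
    fix v assume v: "v \<in> carr (hom H z y)"
    show "klinear (hom H z y) (hom H y x) (?Q v)"
      by (rule klinear_comp[OF kc_linr[OF kcH g] kc_linl[OF kcH]]) (rule Sc[OF v])
  next
    show "req (tgens3 (hom A z y) (hom H z y) (hom H z y)) (cm (\<lambda>(a, h). map (\<lambda>(p, q). (p, q, h)) (\<rho> z y a)) (\<rho> z y c))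
     (cm (\<lambda>(a, h). map (\<lambda>(p, q). (a, p, q)) (\<Delta> z y h)) (\<rho> z y c))" by (rule co_coassoc[OF coA c])
  qed
  have e2: "cm ?\<tau> (cm (\<lambda>(a, h). map (\<lambda>(p, q). (a, p, q)) (\<Delta> z y h)) (\<rho> z y c))
     = cm (\<lambda>q. map (\<lambda>e. (fst q, ?Q (fst e) (snd e))) (\<Delta> z y (snd q))) (\<rho> z y c)"
    by (simp add: cm_cm split_def o_def cm_single map_cm)
  have r2: "req (tgens (hom A z y) (hom H y x)) (cm (\<lambda>q. map (\<lambda>e. (fst q, ?Q (fst e) (snd e))) (\<Delta> z y (snd q))) (\<rho> z y c))
      (cm (\<lambda>q. [(fst q, smul (hom H y x) (\<epsilon> z y (snd q)) g)]) (\<rho> z y c))"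
  proof (rule req_cm_pt)
    fix p assume p: "p \<in> set (\<rho> z y c)"
    have p1: "fst p \<in> carr (hom A z y)" "snd p \<in> carr (hom H z y)" using rin[OF c p] by auto
    have din: "\<forall>e\<in>set (\<Delta> z y (snd p)). fst e \<in> carr (hom H z y) \<and> snd e \<in> carr (hom H z y)"
      using Din[OF p1(2)] by blast
    have m: "req (tgens (hom A z y) (hom H y x)) [(fst p, msum (hom H y x) (map (\<lambda>e. ?Q (fst e) (snd e)) (\<Delta> z y (snd p))))]
        (map (\<lambda>e. (fst p, ?Q (fst e) (snd e))) (\<Delta> z y (snd p)))"
      by (rule msum2[OF HM _ p1(1)]) (use din Sc Hc g in blast)
    have "msum (hom H y x) (map (\<lambda>e. ?Q (fst e) (snd e)) (\<Delta> z y (snd p)))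
       = msum (hom H y x) (map (\<lambda>h. comp H y y x h g) (map (\<lambda>(u, v). comp H y z y (S z y u) v) (\<Delta> z y (snd p))))"
      using din by (auto simp: kc_assoc[OF kcH] Sc g split_def intro!: arg_cong[where f="msum _"])
    also have "\<dots> = comp H y y x (msum (hom H y y) (map (\<lambda>(u, v). comp H y z y (S z y u) v) (\<Delta> z y (snd p)))) g"
      by (rule klinear_msum[OF HM HM kc_linr[OF kcH g], symmetric]) (use din Sc Hc in auto)
    also have "\<dots> = smul (hom H y x) (\<epsilon> z y (snd p)) g"
      using ant2[OF p1(2)] by (simp add: kc_smull[OF kcH] kc_id[OF kcH] kc_idl[OF kcH] g)
    finally show "req (tgens (hom A z y) (hom H y x)) (map (\<lambda>e. (fst p, ?Q (fst e) (snd e))) (\<Delta> z y (snd p)))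
         [(fst p, smul (hom H y x) (\<epsilon> z y (snd p)) g)]" using req_sym[OF m] by simp
  qed
  have r3: "req (tgens (hom A z y) (hom H y x)) (map (\<lambda>(c0, c1). (id c0, smul (hom H y x) (\<epsilon> z y c1) g)) (\<rho> z y c)) [(id c, g)]"
    by (rule counit_contract[OF coA AM HM klinear_id c g])
  have e3: "cm (\<lambda>q. [(fst q, smul (hom H y x) (\<epsilon> z y (snd q)) g)]) (\<rho> z y c)
      = map (\<lambda>(c0, c1). (id c0, smul (hom H y x) (\<epsilon> z y c1) g)) (\<rho> z y c)"
    by (simp add: cm_cm split_def o_def cm_single map_cm)
  show ?thesis unfolding e1 using req_trans[OF r1 req_trans[OF r2[folded e2] r3[folded e3]]] by simp
qed

lemma C3:
  assumes c: "c \<in> carr (hom A z y)" and g: "g \<in> carr (hom H z x)"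
  shows "req (tgens (hom A z y) (hom H z x)) (bet z y x (bet' z y x [(c, g)])) [(c, g)]"
proof -
  let ?Q = "\<lambda>v w. comp H z y x v (comp H y z x (S z y w) g)"
  let ?\<tau> = "\<lambda>(u, v, w). [(id u, ?Q v w)]"
  have e1: "bet z y x (bet' z y x [(c, g)]) = cm ?\<tau> (cm (\<lambda>(a, h). map (\<lambda>(p, q). (p, q, h)) (\<rho> z y a)) (\<rho> z y c))"
    by (simp add: bet_def bet'_def cm_cm split_def o_def cm_single map_cm)
  have r1: "req (tgens (hom A z y) (hom H z x)) (cm ?\<tau> (cm (\<lambda>(a, h). map (\<lambda>(p, q). (p, q, h)) (\<rho> z y a)) (\<rho> z y c)))
     (cm ?\<tau> (cm (\<lambda>(a, h). map (\<lambda>(p, q). (a, p, q)) (\<Delta> z y h)) (\<rho> z y c)))"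
  proof (rule tri_req[OF AM HM klinear_id])
    fix w assume w: "w \<in> carr (hom H z y)"
    show "klinear (hom H z y) (hom H z x) (\<lambda>v. ?Q v w)"
      by (rule kc_linr[OF kcH]) (rule Hc[OF Sc[OF w] g])
  next
    fix v assume v: "v \<in> carr (hom H z y)"
    show "klinear (hom H z y) (hom H z x) (?Q v)"
      by (rule klinear_comp[OF klinear_comp[OF Slin kc_linr[OF kcH g]] kc_linl[OF kcH v]])
  next
    show "req (tgens3 (hom A z y) (hom H z y) (hom H z y)) (cm (\<lambda>(a, h). map (\<lambda>(p, q). (p, q, h)) (\<rho> z y a)) (\<rho> z y c))
     (cm (\<lambda>(a, h). map (\<lambda>(p, q). (a, p, q)) (\<Delta> z y h)) (\<rho> z y c))" by (rule co_coassoc[OF coA c])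
  qed
  have e2: "cm ?\<tau> (cm (\<lambda>(a, h). map (\<lambda>(p, q). (a, p, q)) (\<Delta> z y h)) (\<rho> z y c))
     = cm (\<lambda>q. map (\<lambda>e. (fst q, ?Q (fst e) (snd e))) (\<Delta> z y (snd q))) (\<rho> z y c)"
    by (simp add: cm_cm split_def o_def cm_single map_cm)
  have r2: "req (tgens (hom A z y) (hom H z x)) (cm (\<lambda>q. map (\<lambda>e. (fst q, ?Q (fst e) (snd e))) (\<Delta> z y (snd q))) (\<rho> z y c))
      (cm (\<lambda>q. [(fst q, smul (hom H z x) (\<epsilon> z y (snd q)) g)]) (\<rho> z y c))"
  proof (rule req_cm_pt)
    fix p assume p: "p \<in> set (\<rho> z y c)"
    have p1: "fst p \<in> carr (hom A z y)" "snd p \<in> carr (hom H z y)" using rin[OF c p] by auto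
    have din: "\<forall>e\<in>set (\<Delta> z y (snd p)). fst e \<in> carr (hom H z y) \<and> snd e \<in> carr (hom H z y)"
      using Din[OF p1(2)] by blast
    have m: "req (tgens (hom A z y) (hom H z x)) [(fst p, msum (hom H z x) (map (\<lambda>e. ?Q (fst e) (snd e)) (\<Delta> z y (snd p))))]
        (map (\<lambda>e. (fst p, ?Q (fst e) (snd e))) (\<Delta> z y (snd p)))"
      by (rule msum2[OF HM _ p1(1)]) (use din Sc Hc g in blast)
    have "msum (hom H z x) (map (\<lambda>e. ?Q (fst e) (snd e)) (\<Delta> z y (snd p)))
       = msum (hom H z x) (map (\<lambda>h. comp H z z x h g) (map (\<lambda>(u, v). comp H z y z u (S z y v)) (\<Delta> z y (snd p))))"
      using din by (auto simp: kc_assoc[OF kcH] Sc g split_def intro!: arg_cong[where f="msum _"])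
    also have "\<dots> = comp H z z x (msum (hom H z z) (map (\<lambda>(u, v). comp H z y z u (S z y v)) (\<Delta> z y (snd p)))) g"
      by (rule klinear_msum[OF HM HM kc_linr[OF kcH g], symmetric]) (use din Sc Hc in auto)
    also have "\<dots> = smul (hom H z x) (\<epsilon> z y (snd p)) g"
      using ant1[OF p1(2)] by (simp add: kc_smull[OF kcH] kc_id[OF kcH] kc_idl[OF kcH] g)
    finally show "req (tgens (hom A z y) (hom H z x)) (map (\<lambda>e. (fst p, ?Q (fst e) (snd e))) (\<Delta> z y (snd p)))
         [(fst p, smul (hom H z x) (\<epsilon> z y (snd p)) g)]" using req_sym[OF m] by simp
  qed
  have r3: "req (tgens (hom A z y) (hom H z x)) (map (\<lambda>(c0, c1). (id c0, smul (hom H z x) (\<epsilon> z y c1) g)) (\<rho> z y c)) [(id c, g)]"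
    by (rule counit_contract[OF coA AM HM klinear_id c g])
  have e3: "cm (\<lambda>q. [(fst q, smul (hom H z x) (\<epsilon> z y (snd q)) g)]) (\<rho> z y c)
      = map (\<lambda>(c0, c1). (id c0, smul (hom H z x) (\<epsilon> z y c1) g)) (\<rho> z y c)"
    by (simp add: cm_cm split_def o_def cm_single map_cm)
  show ?thesis unfolding e1 using req_trans[OF r1 req_trans[OF r2[folded e2] r3[folded e3]]] by simp
qed


lemma fr_cm_app: "fr (cm (\<lambda>y. F y @ G y) ys) q = fr (cm F ys) q + (fr (cm G ys) q :: 'c::comm_ring_1)"
  by (induct ys) (auto simp: algebra_simps)

lemma fr_swap: "fr (cm (\<lambda>u. cm (\<lambda>v. f u v) V) U) q = (fr (cm (\<lambda>v. cm (\<lambda>u. f u v) U) V) q :: 'c::comm_ring_1)"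
proof (induct U)
  case Nil then show ?case by (induct V) auto
next
  case (Cons u U)
  have "fr (cm (\<lambda>v. cm (\<lambda>u. f u v) (u # U)) V) q = (fr (cm (\<lambda>v. f u v @ cm (\<lambda>u. f u v) U) V) q :: 'c)" by simp
  also have "\<dots> = fr (cm (f u) V) q + (fr (cm (\<lambda>v. cm (\<lambda>u. f u v) U) V) q :: 'c)" by (rule fr_cm_app)
  finally show ?case using Cons by simp
qed

lemma C1:
  assumes a: "a \<in> carr (hom A z x)" and a': "a' \<in> carr (hom A x y)"
  shows "req (tgens (hom A z y) (hom H z x))
     (cm (\<lambda>u. map (\<lambda>c. (fst c, comp H z y x (snd c) (S x y (snd u)))) (\<rho> z y (comp A z x y a (fst u)))) (\<rho> x y a'))
     (map (\<lambda>v. (comp A z x y (fst v) a', snd v)) (\<rho> z x a))"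
proof -
  let ?F = "\<lambda>u v. map (\<lambda>b. (comp A z x y (fst v) (fst b), comp H z y x (comp H z x y (snd v) (snd b)) (S x y (snd u)))) (\<rho> x y (fst u))"
  have r1: "req (tgens (hom A z y) (hom H z x))
     (cm (\<lambda>u. map (\<lambda>c. (fst c, comp H z y x (snd c) (S x y (snd u)))) (\<rho> z y (comp A z x y a (fst u)))) (\<rho> x y a'))
     (cm (\<lambda>u. cm (\<lambda>v. ?F u v) (\<rho> z x a)) (\<rho> x y a'))"
  proof (rule req_cm_pt)
    fix u assume u: "u \<in> set (\<rho> x y a')"
    have u1: "fst u \<in> carr (hom A x y)" "snd u \<in> carr (hom H x y)" using rin[OF a' u] by auto
    have "req (tgens (hom A z y) (hom H z x))
       (map (\<lambda>(c0, c1). (id c0, comp H z y x c1 (S x y (snd u)))) (\<rho> z y (comp A z x y a (fst u))))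
       (map (\<lambda>(c0, c1). (id c0, comp H z y x c1 (S x y (snd u))))
          (cm (\<lambda>(a0, a1). map (\<lambda>(b0, b1). (comp A z x y a0 b0, comp H z x y a1 b1)) (\<rho> x y (fst u))) (\<rho> z x a)))"
      by (rule map_req[OF klinear_id kc_linr[OF kcH Sc[OF u1(2)]] rho_mult[OF a u1(1)]])
    then show "req (tgens (hom A z y) (hom H z x))
       (map (\<lambda>c. (fst c, comp H z y x (snd c) (S x y (snd u)))) (\<rho> z y (comp A z x y a (fst u))))
       (cm (\<lambda>v. ?F u v) (\<rho> z x a))"
      by (simp add: cm_cm split_def o_def cm_single map_cm)
  qed
  have r2: "req (tgens (hom A z y) (hom H z x)) (cm (\<lambda>u. cm (\<lambda>v. ?F u v) (\<rho> z x a)) (\<rho> x y a'))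
     (cm (\<lambda>v. cm (\<lambda>u. ?F u v) (\<rho> x y a')) (\<rho> z x a))"
    by (rule req_fr) (rule fr_swap)
  have r3: "req (tgens (hom A z y) (hom H z x)) (cm (\<lambda>v. cm (\<lambda>u. ?F u v) (\<rho> x y a')) (\<rho> z x a))
      (cm (\<lambda>v. [(comp A z x y (fst v) a', snd v)]) (\<rho> z x a))"
  proof (rule req_cm_pt)
    fix v assume v: "v \<in> set (\<rho> z x a)"
    have v1: "fst v \<in> carr (hom A z x)" "snd v \<in> carr (hom H z x)" using rin[OF a v] by auto
    let ?Q = "\<lambda>v' w'. comp H z y x (comp H z x y (snd v) v') (S x y w')"
    let ?\<tau> = "\<lambda>(u', v', w'). [(comp A z x y (fst v) u', ?Q v' w')]"
    have e1: "cm (\<lambda>u. ?F u v) (\<rho> x y a') = cm ?\<tau> (cm (\<lambda>(a, h). map (\<lambda>(p, q). (p, q, h)) (\<rho> x y a)) (\<rho> x y a'))"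
      by (simp add: cm_cm split_def o_def cm_single map_cm)
    have t1: "req (tgens (hom A z y) (hom H z x)) (cm ?\<tau> (cm (\<lambda>(a, h). map (\<lambda>(p, q). (p, q, h)) (\<rho> x y a)) (\<rho> x y a')))
        (cm ?\<tau> (cm (\<lambda>(a, h). map (\<lambda>(p, q). (a, p, q)) (\<Delta> x y h)) (\<rho> x y a')))"
    proof (rule tri_req[OF AM HM kc_linl[OF kcA v1(1)]])
      fix w assume w: "w \<in> carr (hom H x y)"
      show "klinear (hom H x y) (hom H z x) (\<lambda>v'. ?Q v' w)"
        by (rule klinear_comp[OF kc_linl[OF kcH v1(2)] kc_linr[OF kcH Sc[OF w]]])
    next
      fix v' assume v': "v' \<in> carr (hom H x y)"
      show "klinear (hom H x y) (hom H z x) (?Q v')"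
        by (rule klinear_comp[OF Slin kc_linl[OF kcH]]) (rule Hc[OF v1(2) v'])
    next
      show "req (tgens3 (hom A x y) (hom H x y) (hom H x y)) (cm (\<lambda>(a, h). map (\<lambda>(p, q). (p, q, h)) (\<rho> x y a)) (\<rho> x y a'))
       (cm (\<lambda>(a, h). map (\<lambda>(p, q). (a, p, q)) (\<Delta> x y h)) (\<rho> x y a'))" by (rule co_coassoc[OF coA a'])
    qed
    have e2: "cm ?\<tau> (cm (\<lambda>(a, h). map (\<lambda>(p, q). (a, p, q)) (\<Delta> x y h)) (\<rho> x y a'))
       = cm (\<lambda>q. map (\<lambda>e. (comp A z x y (fst v) (fst q), ?Q (fst e) (snd e))) (\<Delta> x y (snd q))) (\<rho> x y a')"
      by (simp add: cm_cm split_def o_def cm_single map_cm)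
    have t2: "req (tgens (hom A z y) (hom H z x))
        (cm (\<lambda>q. map (\<lambda>e. (comp A z x y (fst v) (fst q), ?Q (fst e) (snd e))) (\<Delta> x y (snd q))) (\<rho> x y a'))
        (cm (\<lambda>q. [(comp A z x y (fst v) (fst q), smul (hom H z x) (\<epsilon> x y (snd q)) (snd v))]) (\<rho> x y a'))"
    proof (rule req_cm_pt)
      fix p assume p: "p \<in> set (\<rho> x y a')"
      have p1: "fst p \<in> carr (hom A x y)" "snd p \<in> carr (hom H x y)" using rin[OF a' p] by auto
      have din: "\<forall>e\<in>set (\<Delta> x y (snd p)). fst e \<in> carr (hom H x y) \<and> snd e \<in> carr (hom H x y)"
        using Din[OF p1(2)] by blast
      have ap: "comp A z x y (fst v) (fst p) \<in> carr (hom A z y)" by (rule Ac[OF v1(1) p1(1)])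
      have m: "req (tgens (hom A z y) (hom H z x)) [(comp A z x y (fst v) (fst p), msum (hom H z x) (map (\<lambda>e. ?Q (fst e) (snd e)) (\<Delta> x y (snd p))))]
          (map (\<lambda>e. (comp A z x y (fst v) (fst p), ?Q (fst e) (snd e))) (\<Delta> x y (snd p)))"
        by (rule msum2[OF HM _ ap]) (use din Sc Hc v1 in blast)
      have "msum (hom H z x) (map (\<lambda>e. ?Q (fst e) (snd e)) (\<Delta> x y (snd p)))
         = msum (hom H z x) (map (\<lambda>h. comp H z x x (snd v) h) (map (\<lambda>(u, v). comp H x y x u (S x y v)) (\<Delta> x y (snd p))))"
        using din by (auto simp: kc_assoc[OF kcH] Sc v1 split_def intro!: arg_cong[where f="msum _"])
      also have "\<dots> = comp H z x x (snd v) (msum (hom H x x) (map (\<lambda>(u, v). comp H x y x u (S x y v)) (\<Delta> x y (snd p))))"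
        by (rule klinear_msum[OF HM HM kc_linl[OF kcH v1(2)], symmetric]) (use din Sc Hc in auto)
      also have "\<dots> = smul (hom H z x) (\<epsilon> x y (snd p)) (snd v)"
        using ant1[OF p1(2)] by (simp add: kc_smulr[OF kcH] kc_id[OF kcH] kc_idr[OF kcH] v1)
      finally show "req (tgens (hom A z y) (hom H z x)) (map (\<lambda>e. (comp A z x y (fst v) (fst p), ?Q (fst e) (snd e))) (\<Delta> x y (snd p)))
           [(comp A z x y (fst v) (fst p), smul (hom H z x) (\<epsilon> x y (snd p)) (snd v))]" using req_sym[OF m] by simp
    qed
    have t3: "req (tgens (hom A z y) (hom H z x)) (map (\<lambda>(c0, c1). (comp A z x y (fst v) c0, smul (hom H z x) (\<epsilon> x y c1) (snd v))) (\<rho> x y a'))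
        [(comp A z x y (fst v) a', snd v)]"
      by (rule counit_contract[OF coA AM HM kc_linl[OF kcA v1(1)] a' v1(2)])
    have e3: "cm (\<lambda>q. [(comp A z x y (fst v) (fst q), smul (hom H z x) (\<epsilon> x y (snd q)) (snd v))]) (\<rho> x y a')
       = map (\<lambda>(c0, c1). (comp A z x y (fst v) c0, smul (hom H z x) (\<epsilon> x y c1) (snd v))) (\<rho> x y a')"
      by (simp add: cm_cm split_def o_def cm_single map_cm)
    show "req (tgens (hom A z y) (hom H z x)) (cm (\<lambda>u. ?F u v) (\<rho> x y a')) [(comp A z x y (fst v) a', snd v)]"
      unfolding e1 using req_trans[OF t1 req_trans[OF t2[folded e2] t3[folded e3]]] .
  qed
  show ?thesis using req_trans[OF r1 req_trans[OF r2 r3]] by (simp add: cm_single)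
qed

end


lemma ibD1: "induces_bij M N E M' N' E' f \<Longrightarrow> in_tens M N xs \<Longrightarrow> in_tens M' N' (f xs)"
  unfolding induces_bij_def by blast
lemma ibD2: "induces_bij M N E M' N' E' f \<Longrightarrow> in_tens M N xs \<Longrightarrow> in_tens M N ys \<Longrightarrow>
   tens_eq M N E xs ys \<longleftrightarrow> tens_eq M' N' E' (f xs) (f ys)"
  unfolding induces_bij_def by blast
lemma ibD3: "induces_bij M N E M' N' E' f \<Longrightarrow> in_tens M' N' zs \<Longrightarrow> \<exists>xs. in_tens M N xs \<and> tens_eq M' N' E' (f xs) zs"
  unfolding induces_bij_def by blast
lemma ibI: "(\<And>xs. in_tens M N xs \<Longrightarrow> in_tens M' N' (f xs)) \<Longrightarrow>
   (\<And>xs ys. in_tens M N xs \<Longrightarrow> in_tens M N ys \<Longrightarrow> tens_eq M N E xs ys \<longleftrightarrow> tens_eq M' N' E' (f xs) (f ys)) \<Longrightarrow>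
   (\<And>zs. in_tens M' N' zs \<Longrightarrow> \<exists>xs. in_tens M N xs \<and> tens_eq M' N' E' (f xs) zs) \<Longrightarrow>
   induces_bij M N E M' N' E' f"
  unfolding induces_bij_def by blast

lemma ib_comp:
  assumes f: "induces_bij M N E M' N' {} f" and g: "induces_bij M' N' {} M'' N'' {} g"
  shows "induces_bij M N E M'' N'' {} (\<lambda>xs. g (f xs))"
proof (rule ibI)
  fix xs assume "in_tens M N xs" then show "in_tens M'' N'' (g (f xs))"
    using ibD1[OF f] ibD1[OF g] by blast
next
  fix xs ys assume xs: "in_tens M N xs" and ys: "in_tens M N ys"
  have "tens_eq M N E xs ys \<longleftrightarrow> tens_eq M' N' {} (f xs) (f ys)" by (rule ibD2[OF f xs ys])
  also have "\<dots> \<longleftrightarrow> tens_eq M'' N'' {} (g (f xs)) (g (f ys))"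
    by (rule ibD2[OF g ibD1[OF f xs] ibD1[OF f ys]])
  finally show "tens_eq M N E xs ys \<longleftrightarrow> tens_eq M'' N'' {} (g (f xs)) (g (f ys))" .
next
  fix zs assume zs: "in_tens M'' N'' zs"
  obtain ws where ws: "in_tens M' N' ws" "tens_eq M'' N'' {} (g ws) zs" using ibD3[OF g zs] by blast
  obtain xs where xs: "in_tens M N xs" "tens_eq M' N' {} (f xs) ws" using ibD3[OF f ws(1)] by blast
  have fx: "in_tens M' N' (f xs)" by (rule ibD1[OF f xs(1)])
  have "tens_eq M'' N'' {} (g (f xs)) (g ws)" using ibD2[OF g fx ws(1)] xs(2) by blast
  then have "tens_eq M'' N'' {} (g (f xs)) zs" using ws(2) by (simp add: teq_req req_trans)
  then show "\<exists>xs. in_tens M N xs \<and> tens_eq M'' N'' {} (g (f xs)) zs" using xs(1) by blast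
qed

lemma ib_cancel:
  assumes gf: "induces_bij M N E M'' N'' {} (\<lambda>xs. g (f xs))" and g: "induces_bij M' N' {} M'' N'' {} g"
    and fin: "\<And>xs. in_tens M N xs \<Longrightarrow> in_tens M' N' (f xs)"
  shows "induces_bij M N E M' N' {} f"
proof (rule ibI)
  fix xs assume "in_tens M N xs" then show "in_tens M' N' (f xs)" by (rule fin)
next
  fix xs ys assume xs: "in_tens M N xs" and ys: "in_tens M N ys"
  have "tens_eq M N E xs ys \<longleftrightarrow> tens_eq M'' N'' {} (g (f xs)) (g (f ys))" by (rule ibD2[OF gf xs ys])
  also have "\<dots> \<longleftrightarrow> tens_eq M' N' {} (f xs) (f ys)"
    by (rule ibD2[OF g fin[OF xs] fin[OF ys], symmetric])
  finally show "tens_eq M N E xs ys \<longleftrightarrow> tens_eq M' N' {} (f xs) (f ys)" .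
next
  fix ws assume ws: "in_tens M' N' ws"
  have gw: "in_tens M'' N'' (g ws)" by (rule ibD1[OF g ws])
  obtain xs where xs: "in_tens M N xs" "tens_eq M'' N'' {} (g (f xs)) (g ws)" using ibD3[OF gf gw] by blast
  have "tens_eq M' N' {} (f xs) ws" using ibD2[OF g fin[OF xs(1)] ws] xs(2) by blast
  then show "\<exists>xs. in_tens M N xs \<and> tens_eq M' N' {} (f xs) ws" using xs(1) by blast
qed

lemma ib_cong:
  assumes f: "induces_bij M N E M' N' {} f"
    and fin: "\<And>xs. in_tens M N xs \<Longrightarrow> in_tens M' N' (f' xs)"
    and eq: "\<And>xs. in_tens M N xs \<Longrightarrow> tens_eq M' N' {} (f xs) (f' xs)"
  shows "induces_bij M N E M' N' {} f'"
proof (rule ibI)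
  fix xs assume "in_tens M N xs" then show "in_tens M' N' (f' xs)" by (rule fin)
next
  fix xs ys assume xs: "in_tens M N xs" and ys: "in_tens M N ys"
  have "tens_eq M N E xs ys \<longleftrightarrow> tens_eq M' N' {} (f xs) (f ys)" by (rule ibD2[OF f xs ys])
  also have "\<dots> \<longleftrightarrow> tens_eq M' N' {} (f' xs) (f' ys)"
  proof -
    have a: "req (tgens M' N') (f xs) (f' xs)" "req (tgens M' N') (f ys) (f' ys)" using eq[OF xs] eq[OF ys] by (simp_all add: teq_req)
    have "req (tgens M' N') (f xs) (f ys) \<longleftrightarrow> req (tgens M' N') (f' xs) (f' ys)"
      using req_trans[OF req_trans[OF req_sym[OF a(1)]] a(2)] req_trans[OF req_trans[OF a(1)] req_sym[OF a(2)]] by blast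
    then show ?thesis by (simp add: teq_req)
  qed
  finally show "tens_eq M N E xs ys \<longleftrightarrow> tens_eq M' N' {} (f' xs) (f' ys)" .
next
  fix zs assume zs: "in_tens M' N' zs"
  obtain xs where xs: "in_tens M N xs" "tens_eq M' N' {} (f xs) zs" using ibD3[OF f zs] by blast
  have "req (tgens M' N') (f' xs) zs" using eq[OF xs(1)] xs(2) by (simp add: teq_req) (metis req_sym req_trans)
  then show "\<exists>xs. in_tens M N xs \<and> tens_eq M' N' {} (f' xs) zs" using xs(1) by (auto simp: teq_req)
qed

lemma in_tens_Cons[simp]: "in_tens M N (x # xs) \<longleftrightarrow> fst x \<in> carr M \<and> snd x \<in> carr N \<and> in_tens M N xs"
  by (auto simp: in_tens_def split_def)
lemma in_tens_Nil[simp]: "in_tens M N []" by (simp add: in_tens_def)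
lemma in_tens_app[simp]: "in_tens M N (xs @ ys) \<longleftrightarrow> in_tens M N xs \<and> in_tens M N ys"
  by (auto simp: in_tens_def)
lemma in_tens_cm: "(\<And>u. u \<in> set xs \<Longrightarrow> in_tens M N (t u)) \<Longrightarrow> in_tens M N (cm t xs)"
  by (induct xs) auto
lemma in_tens_map: "(\<And>u. u \<in> set xs \<Longrightarrow> fst (f u) \<in> carr M \<and> snd (f u) \<in> carr N) \<Longrightarrow> in_tens M N (map f xs)"
  by (auto simp: in_tens_def split_def)
lemma in_tensD: "in_tens M N xs \<Longrightarrow> u \<in> set xs \<Longrightarrow> fst u \<in> carr M \<and> snd u \<in> carr N"
  by (auto simp: in_tens_def split_def)


lemma klinear_inv:
  assumes M: "kmodule M" and N: "kmodule N" and f: "klinear M N f" and b: "bij_betw f (carr M) (carr N)"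
  shows "klinear N M (inv_into (carr M) f)"
proof -
  let ?T = "inv_into (carr M) f"
  have im: "f ` carr M = carr N" by (rule bij_betw_imp_surj_on[OF b])
  have ij: "inj_on f (carr M)" by (rule bij_betw_imp_inj_on[OF b])
  have Tc: "\<And>a. a \<in> carr N \<Longrightarrow> ?T a \<in> carr M" by (rule inv_into_into) (simp add: im)
  have fT: "\<And>a. a \<in> carr N \<Longrightarrow> f (?T a) = a" by (rule f_inv_into_f) (simp add: im)
  have Tf: "\<And>a. a \<in> carr M \<Longrightarrow> ?T (f a) = a" by (rule inv_into_f_f[OF ij])
  show ?thesis unfolding klinear_def
  proof (intro conjI ballI allI)
    fix a assume "a \<in> carr N" then show "?T a \<in> carr M" by (rule Tc)
  next
    fix a b assume a: "a \<in> carr N" and b: "b \<in> carr N"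
    have "f (addm M (?T a) (?T b)) = addm N a b" using f Tc[OF a] Tc[OF b] fT[OF a] fT[OF b] by (simp add: klinear_def)
    then have "?T (addm N a b) = ?T (f (addm M (?T a) (?T b)))" by simp
    also have "\<dots> = addm M (?T a) (?T b)" by (rule Tf[OF km_add[OF M Tc[OF a] Tc[OF b]]])
    finally show "?T (addm N a b) = addm M (?T a) (?T b)" .
  next
    fix c a assume a: "a \<in> carr N"
    have "f (smul M c (?T a)) = smul N c a" using f Tc[OF a] fT[OF a] by (simp add: klinear_def)
    then have "?T (smul N c a) = ?T (f (smul M c (?T a)))" by simp
    also have "\<dots> = smul M c (?T a)" by (rule Tf[OF km_smul[OF M Tc[OF a]]])
    finally show "?T (smul N c a) = smul M c (?T a)" .
  qed
qed

context HS begin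

definition idS :: "'x \<Rightarrow> 'x \<Rightarrow> ('a \<times> 'h) list \<Rightarrow> ('a \<times> 'h) list" where
  "idS x y xs = map (\<lambda>(c, g). (c, S x y g)) xs"

lemma bet_in: "in_tens (hom A z y) (hom H y x) xs \<Longrightarrow> in_tens (hom A z y) (hom H z x) (bet z y x xs)"
  unfolding bet_def
proof (rule in_tens_cm)
  fix u assume xs: "in_tens (hom A z y) (hom H y x) xs" and u: "u \<in> set xs"
  have u1: "fst u \<in> carr (hom A z y)" "snd u \<in> carr (hom H y x)" using in_tensD[OF xs u] by auto
  show "in_tens (hom A z y) (hom H z x) ((\<lambda>(c, g). map (\<lambda>(c0, c1). (c0, comp H z y x c1 g)) (\<rho> z y c)) u)"
  proof (cases u)
    case (Pair c g)
    show ?thesis unfolding Pair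
    proof (simp only: prod.case, rule in_tens_map)
      fix p assume pin: "p \<in> set (\<rho> z y c)"
      have "c \<in> carr (hom A z y)" using u1 Pair by simp
      from rin[OF this pin] have "fst p \<in> carr (hom A z y)" "snd p \<in> carr (hom H z y)" by auto
      then show "fst ((\<lambda>(c0, c1). (c0, comp H z y x c1 g)) p) \<in> carr (hom A z y) \<and>
          snd ((\<lambda>(c0, c1). (c0, comp H z y x c1 g)) p) \<in> carr (hom H z x)"
        using Hc u1 Pair by (simp add: split_def)
    qed
  qed
qed

lemma bet'_in: "in_tens (hom A z y) (hom H z x) xs \<Longrightarrow> in_tens (hom A z y) (hom H y x) (bet' z y x xs)"
  unfolding bet'_def
proof (rule in_tens_cm)
  fix u assume xs: "in_tens (hom A z y) (hom H z x) xs" and u: "u \<in> set xs"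
  have u1: "fst u \<in> carr (hom A z y)" "snd u \<in> carr (hom H z x)" using in_tensD[OF xs u] by auto
  show "in_tens (hom A z y) (hom H y x) ((\<lambda>(c, h). map (\<lambda>(c0, c1). (c0, comp H y z x (S z y c1) h)) (\<rho> z y c)) u)"
  proof (cases u)
    case (Pair c g)
    show ?thesis unfolding Pair
    proof (simp only: prod.case, rule in_tens_map)
      fix p assume pin: "p \<in> set (\<rho> z y c)"
      have "c \<in> carr (hom A z y)" using u1 Pair by simp
      from rin[OF this pin] have "fst p \<in> carr (hom A z y)" "snd p \<in> carr (hom H z y)" by auto
      then show "fst ((\<lambda>(c0, c1). (c0, comp H y z x (S z y c1) g)) p) \<in> carr (hom A z y) \<and>
          snd ((\<lambda>(c0, c1). (c0, comp H y z x (S z y c1) g)) p) \<in> carr (hom H y x)"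
        using Hc Sc u1 Pair by (simp add: split_def)
    qed
  qed
qed

lemma idS_in: "in_tens (hom A z y) (hom H x y) xs \<Longrightarrow> in_tens (hom A z y) (hom H y x) (idS x y xs)"
  unfolding idS_def
proof (rule in_tens_map)
  fix u assume xs: "in_tens (hom A z y) (hom H x y) xs" and u: "u \<in> set xs"
  show "fst ((\<lambda>(c, g). (c, S x y g)) u) \<in> carr (hom A z y) \<and> snd ((\<lambda>(c, g). (c, S x y g)) u) \<in> carr (hom H y x)"
    using in_tensD[OF xs u] Sc by (simp add: split_def)
qed

lemma can_in: "in_tens (hom A z x) (hom A x y) xs \<Longrightarrow> in_tens (hom A z y) (hom H x y) (can A \<rho> z x y xs)"
  unfolding can_def cm_def[symmetric]
proof (rule in_tens_cm)
  fix u assume xs: "in_tens (hom A z x) (hom A x y) xs" and u: "u \<in> set xs"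
  have u1: "fst u \<in> carr (hom A z x)" "snd u \<in> carr (hom A x y)" using in_tensD[OF xs u] by auto
  show "in_tens (hom A z y) (hom H x y) ((\<lambda>(a, a'). map (\<lambda>(p, q). (comp A z x y a p, q)) (\<rho> x y a')) u)"
  proof (cases u)
    case (Pair c g)
    show ?thesis unfolding Pair
    proof (simp only: prod.case, rule in_tens_map)
      fix p assume pin: "p \<in> set (\<rho> x y g)"
      have "g \<in> carr (hom A x y)" using u1 Pair by simp
      from rin[OF this pin] have "fst p \<in> carr (hom A x y)" "snd p \<in> carr (hom H x y)" by auto
      then show "fst ((\<lambda>(p, q). (comp A z x y c p, q)) p) \<in> carr (hom A z y) \<and>
          snd ((\<lambda>(p, q). (comp A z x y c p, q)) p) \<in> carr (hom H x y)"
        using Ac u1 Pair by (simp add: split_def)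
    qed
  qed
qed

lemma can'_in: "in_tens (hom A z x) (hom A x y) xs \<Longrightarrow> in_tens (hom A z y) (hom H z x) (can' A \<rho> z x y xs)"
  unfolding can'_def cm_def[symmetric]
proof (rule in_tens_cm)
  fix u assume xs: "in_tens (hom A z x) (hom A x y) xs" and u: "u \<in> set xs"
  have u1: "fst u \<in> carr (hom A z x)" "snd u \<in> carr (hom A x y)" using in_tensD[OF xs u] by auto
  show "in_tens (hom A z y) (hom H z x) ((\<lambda>(a, a'). map (\<lambda>(p, q). (comp A z x y p a', q)) (\<rho> z x a)) u)"
  proof (cases u)
    case (Pair c g)
    show ?thesis unfolding Pair
    proof (simp only: prod.case, rule in_tens_map)
      fix p assume pin: "p \<in> set (\<rho> z x c)"
      have "c \<in> carr (hom A z x)" using u1 Pair by simp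
      from rin[OF this pin] have "fst p \<in> carr (hom A z x)" "snd p \<in> carr (hom H z x)" by auto
      then show "fst ((\<lambda>(p, q). (comp A z x y p g, q)) p) \<in> carr (hom A z y) \<and>
          snd ((\<lambda>(p, q). (comp A z x y p g, q)) p) \<in> carr (hom H z x)"
        using Ac u1 Pair by (simp add: split_def)
    qed
  qed
qed

lemma bet_resp: "req (tgens (hom A z y) (hom H y x)) xs ys \<Longrightarrow> req (tgens (hom A z y) (hom H z x)) (bet z y x xs) (bet z y x ys)"
  unfolding bet_def by (rule bil_req[OF coA kc_linr[OF kcH] kc_linl[OF kcH]])

lemma bet'_resp: "req (tgens (hom A z y) (hom H z x)) xs ys \<Longrightarrow> req (tgens (hom A z y) (hom H y x)) (bet' z y x xs) (bet' z y x ys)"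
  unfolding bet'_def
proof (rule bil_req[OF coA, where \<Phi>="\<lambda>c1 h. comp H y z x (S z y c1) h"])
  fix g assume g: "g \<in> carr (hom H z x)"
  show "klinear (hom H z y) (hom H y x) (\<lambda>h. comp H y z x (S z y h) g)"
    by (rule klinear_comp[OF Slin kc_linr[OF kcH g]])
next
  fix h assume h: "h \<in> carr (hom H z y)"
  show "klinear (hom H z x) (hom H y x) (comp H y z x (S z y h))"
    by (rule kc_linl[OF kcH Sc[OF h]])
qed

lemma bet_cons: "bet z y x (u # xs) = bet z y x [u] @ bet z y x xs" unfolding bet_def by simp
lemma bet'_cons: "bet' z y x (u # xs) = bet' z y x [u] @ bet' z y x xs" unfolding bet'_def by simp
lemma bet_app: "bet z y x (xs @ ys) = bet z y x xs @ bet z y x ys" unfolding bet_def by (rule cm_simps(3))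
lemma bet'_app: "bet' z y x (xs @ ys) = bet' z y x xs @ bet' z y x ys" unfolding bet'_def by (rule cm_simps(3))
lemma bet_nil: "bet z y x [] = []" unfolding bet_def by simp
lemma bet'_nil: "bet' z y x [] = []" unfolding bet'_def by simp
lemma bb'_split: "bet' z y x (bet z y x xs) = cm (\<lambda>u. bet' z y x (bet z y x [u])) xs"
proof (induct xs)
  case Nil then show ?case by (simp only: bet_nil bet'_nil cm_simps(1))
next
  case (Cons u xs) then show ?case by (simp only: bet_cons[of z y x u xs] bet'_app cm_simps(2))
qed
lemma b'b_split: "bet z y x (bet' z y x xs) = cm (\<lambda>u. bet z y x (bet' z y x [u])) xs"
proof (induct xs)
  case Nil then show ?case by (simp only: bet_nil bet'_nil cm_simps(1))
next
  case (Cons u xs) then show ?case by (simp only: bet'_cons[of z y x u xs] bet_app cm_simps(2))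
qed

lemma cm_id: "cm (\<lambda>u. [u]) xs = xs" by (induct xs) auto

lemma C2L: "in_tens (hom A z y) (hom H y x) xs \<Longrightarrow> req (tgens (hom A z y) (hom H y x)) (bet' z y x (bet z y x xs)) xs"
proof -
  assume xs: "in_tens (hom A z y) (hom H y x) xs"
  have "req (tgens (hom A z y) (hom H y x)) (cm (\<lambda>u. bet' z y x (bet z y x [u])) xs) (cm (\<lambda>u. [u]) xs)"
  proof (rule req_cm_pt)
    fix u assume u: "u \<in> set xs"
    have u1: "fst u \<in> carr (hom A z y)" "snd u \<in> carr (hom H y x)" using in_tensD[OF xs u] by auto
    show "req (tgens (hom A z y) (hom H y x)) (bet' z y x (bet z y x [u])) [u]" using C2[OF u1] by (simp only: prod.collapse)
  qed
  then show ?thesis by (simp only: bb'_split[of z y x xs] cm_id)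
qed

lemma C3L: "in_tens (hom A z y) (hom H z x) xs \<Longrightarrow> req (tgens (hom A z y) (hom H z x)) (bet z y x (bet' z y x xs)) xs"
proof -
  assume xs: "in_tens (hom A z y) (hom H z x) xs"
  have "req (tgens (hom A z y) (hom H z x)) (cm (\<lambda>u. bet z y x (bet' z y x [u])) xs) (cm (\<lambda>u. [u]) xs)"
  proof (rule req_cm_pt)
    fix u assume u: "u \<in> set xs"
    have u1: "fst u \<in> carr (hom A z y)" "snd u \<in> carr (hom H z x)" using in_tensD[OF xs u] by auto
    show "req (tgens (hom A z y) (hom H z x)) (bet z y x (bet' z y x [u])) [u]" using C3[OF u1] by (simp only: prod.collapse)
  qed
  then show ?thesis by (simp only: b'b_split[of z y x xs] cm_id)
qed

lemma bet_ib: "induces_bij (hom A z y) (hom H y x) {} (hom A z y) (hom H z x) {} (bet z y x)"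
proof (rule ibI)
  fix xs assume "in_tens (hom A z y) (hom H y x) xs" then show "in_tens (hom A z y) (hom H z x) (bet z y x xs)" by (rule bet_in)
next
  fix xs ys assume xs: "in_tens (hom A z y) (hom H y x) xs" and ys: "in_tens (hom A z y) (hom H y x) ys"
  show "tens_eq (hom A z y) (hom H y x) {} xs ys \<longleftrightarrow> tens_eq (hom A z y) (hom H z x) {} (bet z y x xs) (bet z y x ys)"
    unfolding teq_req
  proof
    assume "req (tgens (hom A z y) (hom H y x)) xs ys" then show "req (tgens (hom A z y) (hom H z x)) (bet z y x xs) (bet z y x ys)"
      by (rule bet_resp)
  next
    assume "req (tgens (hom A z y) (hom H z x)) (bet z y x xs) (bet z y x ys)"
    then have "req (tgens (hom A z y) (hom H y x)) (bet' z y x (bet z y x xs)) (bet' z y x (bet z y x ys))" by (rule bet'_resp)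
    then show "req (tgens (hom A z y) (hom H y x)) xs ys"
      by (rule req_trans[OF req_sym[OF C2L[OF xs]] req_trans[OF _ C2L[OF ys]]])
  qed
next
  fix zs assume zs: "in_tens (hom A z y) (hom H z x) zs"
  show "\<exists>xs. in_tens (hom A z y) (hom H y x) xs \<and> tens_eq (hom A z y) (hom H z x) {} (bet z y x xs) zs"
    using bet'_in[OF zs] C3L[OF zs] by (auto simp: teq_req)
qed

lemma idS_ib: "induces_bij (hom A z y) (hom H x y) {} (hom A z y) (hom H y x) {} (idS x y)"
proof -
  let ?T = "inv_into (carr (hom H x y)) (S x y)"
  have b: "bij_betw (S x y) (carr (hom H x y)) (carr (hom H y x))" using sbij by simp
  have Tl: "klinear (hom H y x) (hom H x y) ?T" by (rule klinear_inv[OF HM HM Slin b])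
  have im: "S x y ` carr (hom H x y) = carr (hom H y x)" by (rule bij_betw_imp_surj_on[OF b])
  have ij: "inj_on (S x y) (carr (hom H x y))" by (rule bij_betw_imp_inj_on[OF b])
  have Tf: "\<And>a. a \<in> carr (hom H x y) \<Longrightarrow> ?T (S x y a) = a" by (rule inv_into_f_f[OF ij])
  have fT: "\<And>a. a \<in> carr (hom H y x) \<Longrightarrow> S x y (?T a) = a" by (rule f_inv_into_f) (simp add: im)
  have Tc: "\<And>a. a \<in> carr (hom H y x) \<Longrightarrow> ?T a \<in> carr (hom H x y)" using Tl by (simp add: klinear_def)
  have bk: "\<And>xs. in_tens (hom A z y) (hom H x y) xs \<Longrightarrow> map (\<lambda>(u, v). (id u, ?T v)) (idS x y xs) = xs"
    by (auto simp: idS_def in_tens_def Tf intro!: map_idI)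
  show ?thesis
  proof (rule ibI)
    fix xs assume "in_tens (hom A z y) (hom H x y) xs" then show "in_tens (hom A z y) (hom H y x) (idS x y xs)" by (rule idS_in)
  next
    fix xs ys assume xs: "in_tens (hom A z y) (hom H x y) xs" and ys: "in_tens (hom A z y) (hom H x y) ys"
    show "tens_eq (hom A z y) (hom H x y) {} xs ys \<longleftrightarrow> tens_eq (hom A z y) (hom H y x) {} (idS x y xs) (idS x y ys)"
      unfolding teq_req
    proof
      assume "req (tgens (hom A z y) (hom H x y)) xs ys"
      from map_req[OF klinear_id Slin this] show "req (tgens (hom A z y) (hom H y x)) (idS x y xs) (idS x y ys)"
        by (simp add: idS_def)
    next
      assume "req (tgens (hom A z y) (hom H y x)) (idS x y xs) (idS x y ys)"
      from map_req[OF klinear_id Tl this] show "req (tgens (hom A z y) (hom H x y)) xs ys"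
        by (simp only: bk[OF xs] bk[OF ys])
    qed
  next
    fix zs assume zs: "in_tens (hom A z y) (hom H y x) zs"
    let ?xs = "map (\<lambda>(u, v). (u, ?T v)) zs"
    have "in_tens (hom A z y) (hom H x y) ?xs" using zs Tc by (auto simp: in_tens_def)
    moreover have "idS x y ?xs = zs" using zs fT by (auto simp: idS_def in_tens_def intro!: map_idI)
    ultimately show "\<exists>xs. in_tens (hom A z y) (hom H x y) xs \<and> tens_eq (hom A z y) (hom H y x) {} (idS x y xs) zs"
      by (auto simp: teq_req req_refl)
  qed
qed

lemma C1L: "in_tens (hom A z x) (hom A x y) xs \<Longrightarrow>
   tens_eq (hom A z y) (hom H z x) {} (bet z y x (idS x y (can A \<rho> z x y xs))) (can' A \<rho> z x y xs)"
proof -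
  assume xs: "in_tens (hom A z x) (hom A x y) xs"
  have e1: "bet z y x (idS x y (can A \<rho> z x y xs)) = cm (\<lambda>w. cm (\<lambda>u. map (\<lambda>c. (fst c, comp H z y x (snd c) (S x y (snd u)))) (\<rho> z y (comp A z x y (fst w) (fst u)))) (\<rho> x y (snd w))) xs"
    by (simp add: bet_def idS_def can_def cm_def[symmetric] cm_cm split_def o_def cm_single map_cm)
  have e2: "can' A \<rho> z x y xs = cm (\<lambda>w. map (\<lambda>v. (comp A z x y (fst v) (snd w), snd v)) (\<rho> z x (fst w))) xs"
    by (simp add: can'_def cm_def[symmetric] split_def)
  show ?thesis unfolding teq_req e1 e2
  proof (rule req_cm_pt)
    fix u assume u: "u \<in> set xs"
    have u1: "fst u \<in> carr (hom A z x)" "snd u \<in> carr (hom A x y)" using in_tensD[OF xs u] by auto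
    show "req (tgens (hom A z y) (hom H z x))
      (cm (\<lambda>w. map (\<lambda>c. (fst c, comp H z y x (snd c) (S x y (snd w)))) (\<rho> z y (comp A z x y (fst u) (fst w)))) (\<rho> x y (snd u)))
      (map (\<lambda>v. (comp A z x y (fst v) (snd u), snd v)) (\<rho> z x (fst u)))"
      by (rule C1[OF u1])
  qed
qed

lemma main_xyz:
  "induces_bij (hom A z x) (hom A x y) (bal_rel H A \<rho> z x y) (hom A z y) (hom H z x) {} (can' A \<rho> z x y)
   \<longleftrightarrow> induces_bij (hom A z x) (hom A x y) (bal_rel H A \<rho> z x y) (hom A z y) (hom H x y) {} (can A \<rho> z x y)"
proof -
  have G: "induces_bij (hom A z y) (hom H x y) {} (hom A z y) (hom H z x) {} (\<lambda>xs. bet z y x (idS x y xs))"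
    by (rule ib_comp[OF idS_ib bet_ib])
  show ?thesis
  proof
    assume c': "induces_bij (hom A z x) (hom A x y) (bal_rel H A \<rho> z x y) (hom A z y) (hom H z x) {} (can' A \<rho> z x y)"
    have "induces_bij (hom A z x) (hom A x y) (bal_rel H A \<rho> z x y) (hom A z y) (hom H z x) {} (\<lambda>xs. bet z y x (idS x y (can A \<rho> z x y xs)))"
    proof (rule ib_cong[OF c'])
      fix xs assume xs: "in_tens (hom A z x) (hom A x y) xs"
      show "in_tens (hom A z y) (hom H z x) (bet z y x (idS x y (can A \<rho> z x y xs)))"
        by (rule bet_in[OF idS_in[OF can_in[OF xs]]])
      show "tens_eq (hom A z y) (hom H z x) {} (can' A \<rho> z x y xs) (bet z y x (idS x y (can A \<rho> z x y xs)))"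
        using C1L[OF xs] by (simp add: teq_req req_sym)
    qed
    then show "induces_bij (hom A z x) (hom A x y) (bal_rel H A \<rho> z x y) (hom A z y) (hom H x y) {} (can A \<rho> z x y)"
      by (rule ib_cancel[OF _ G can_in])
  next
    assume c: "induces_bij (hom A z x) (hom A x y) (bal_rel H A \<rho> z x y) (hom A z y) (hom H x y) {} (can A \<rho> z x y)"
    have "induces_bij (hom A z x) (hom A x y) (bal_rel H A \<rho> z x y) (hom A z y) (hom H z x) {} (\<lambda>xs. bet z y x (idS x y (can A \<rho> z x y xs)))"
      by (rule ib_comp[OF c G])
    then show "induces_bij (hom A z x) (hom A x y) (bal_rel H A \<rho> z x y) (hom A z y) (hom H z x) {} (can' A \<rho> z x y)"
    proof (rule ib_cong)
      fix xs assume xs: "in_tens (hom A z x) (hom A x y) xs"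
      show "in_tens (hom A z y) (hom H z x) (can' A \<rho> z x y xs)" by (rule can'_in[OF xs])
      show "tens_eq (hom A z y) (hom H z x) {} (bet z y x (idS x y (can A \<rho> z x y xs))) (can' A \<rho> z x y xs)"
        by (rule C1L[OF xs])
    qed
  qed
qed

end

theorem theorem3p14:
  fixes H :: "('x, 'k::comm_ring_1, 'h) kcat"
    and \<Delta> :: "'x \<Rightarrow> 'x \<Rightarrow> 'h \<Rightarrow> ('h \<times> 'h) list"
    and \<epsilon> :: "'x \<Rightarrow> 'x \<Rightarrow> 'h \<Rightarrow> 'k"
    and S :: "'x \<Rightarrow> 'x \<Rightarrow> 'h \<Rightarrow> 'h"
    and A :: "('x, 'k, 'a) kcat"
    and \<rho> :: "'x \<Rightarrow> 'x \<Rightarrow> 'a \<Rightarrow> ('a \<times> 'h) list"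
  assumes "hopf_category H \<Delta> \<epsilon> S"
    and "\<forall>x y. bij_betw (S x y) (carr (hom H x y)) (carr (hom H y x))"
    and "comodule_category H \<Delta> \<epsilon> A \<rho>"
  shows "(\<forall>x y z. induces_bij (hom A z x) (hom A x y) (bal_rel H A \<rho> z x y)
                              (hom A z y) (hom H z x) {} (can' A \<rho> z x y))
     \<longleftrightarrow> (\<forall>x y z. induces_bij (hom A z x) (hom A x y) (bal_rel H A \<rho> z x y)
                              (hom A z y) (hom H x y) {} (can A \<rho> z x y))"
proof -
  interpret HS H \<Delta> \<epsilon> S A \<rho> using assms by (unfold_locales)
  show ?thesis by (simp only: main_xyz)
qed


end
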